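(* Let $n=2m$ be even and $1\le i\le m$. Let \[ \psi_{2i,0}=\sum_{I\subseteq\{1,\dots,n\},\ |I|=m-i}e_I\wedge f_I\otimes 1\ \in\ \wedge^{n-2i}V\otimes\Delta_+ . \] Then the projection of $\psi_{2i,0}$ onto the Cartan component $V_{\omega_n+\omega_{n-2i}}\subset\wedge^{n-2i}V\otimes\Delta_+$ is nonzero.
   Context: Let $V$ be a complex vector space of dimension $2n$ with a nondegenerate symmetric bilinear form $q$, $V=E\oplus F$ with $E,F$ maximal isotropic, bases $e_1,\dots,e_n$ of $E$ and $f_1,\dots,f_n$ of $F$ with $q(e_i,f_j)=\delta_{ij}$. For $I=\{i_1<\dots<i_k\}$, $e_I=e_{i_1}\wedge\cdots\wedge e_{i_k}$ and $f_I=f_{i_1}\wedge\cdots\wedge f_{i_k}$. $\mathrm{Spin}(V)$ is of type $D_n$ with fundamental weights $\omega_1,\dots,\omega_n$ (Bourbaki), $\omega_0:=0$; $V_\lambda$ denotes the irreducible module of highest weight $\lambda$; $\wedge^kV=V_{\omega_k}$ for $k\le n-2$. For $n$ even, $\Delta_+=\wedge^{\mathrm{even}}E=V_{\omega_n}$ and $\Delta_-=\wedge^{\mathrm{odd}}E=V_{\omega_{n-1}}$ (half-spin representations, with the $Cl(V)$-module structure on $\wedge E$ in which $v=v'+v''\in E\oplus F$ acts by $o(v')+2i(v'')$). The Cartan component of $V_\lambda\otimes V_\mu$ is the unique irreducible submodule of highest weight $\lambda+\mu$ (occurring with multiplicity one). *)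

theory Defs
  imports Complex_Main
begin

text \<open>V has basis b_1..b_2n with e_j = b_j, f_j = b_(n+j).
  An element of the exterior algebra on basis vectors indexed by nat is a
  coefficient function on finite index sets S (b_S = wedge of b_s, s in S, increasing).\<close>

type_synonym ext = "nat set \<Rightarrow> complex"
type_synonym tens = "nat set \<times> nat set \<Rightarrow> complex"

definition sgn_ins :: "nat \<Rightarrow> nat set \<Rightarrow> complex" where
  "sgn_ins c T = (-1) ^ card {t\<in>T. t < c}"

definition wedge_op :: "nat \<Rightarrow> ext \<Rightarrow> ext" where
  "wedge_op c \<phi> = (\<lambda>S. if c \<in> S then sgn_ins c (S - {c}) * \<phi> (S - {c}) else 0)"

text \<open>contraction (interior product) by the dual basis vector b_c^*\<close>
definition contr_op :: "nat \<Rightarrow> ext \<Rightarrow> ext" where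
  "contr_op c \<phi> = (\<lambda>S. if c \<notin> S then sgn_ins c S * \<phi> (insert c S) else 0)"

text \<open>q(b_a, b_(dual a)) = 1; so contraction with q(b_c, -) is contr_op (dual c)\<close>
definition dual_idx :: "nat \<Rightarrow> nat \<Rightarrow> nat" where
  "dual_idx n c = (if c \<le> n then c + n else c - n)"

text \<open>action of b_a \<and> b_b in so(V) = wedge^2 V on wedge V:
  v \<mapsto> q(b_b,v) b_a - q(b_a,v) b_b, extended as a derivation\<close>
definition vrep :: "nat \<Rightarrow> nat \<Rightarrow> nat \<Rightarrow> ext \<Rightarrow> ext" where
  "vrep n a b \<phi> = (\<lambda>S. wedge_op a (contr_op (dual_idx n b) \<phi>) S
                        - wedge_op b (contr_op (dual_idx n a) \<phi>) S)"

text \<open>Clifford action on wedge E: e_j acts by o(e_j), f_j by 2 i(f_j)\<close>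
definition cliff :: "nat \<Rightarrow> nat \<Rightarrow> ext \<Rightarrow> ext" where
  "cliff n a = (if a \<le> n then wedge_op a else (\<lambda>\<phi> S. 2 * contr_op (a - n) \<phi> S))"

text \<open>spin action of b_a \<and> b_b: (1/4)(b_a b_b - b_b b_a) in the Clifford algebra\<close>
definition srep :: "nat \<Rightarrow> nat \<Rightarrow> nat \<Rightarrow> ext \<Rightarrow> ext" where
  "srep n a b \<phi> = (\<lambda>S. (1/4) * (cliff n a (cliff n b \<phi>) S - cliff n b (cliff n a \<phi>) S))"

text \<open>action on wedge^k V \<otimes> wedge E (first coordinate: wedge V, second: wedge E)\<close>
definition trep :: "nat \<Rightarrow> nat \<Rightarrow> nat \<Rightarrow> tens \<Rightarrow> tens" where
  "trep n a b \<Phi> = (\<lambda>(S, J). vrep n a b (\<lambda>S'. \<Phi> (S', J)) S + srep n a b (\<lambda>J'. \<Phi> (S, J')) J)"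

text \<open>the module wedge^k V \<otimes> \<Delta>_+\<close>
definition tspace :: "nat \<Rightarrow> nat \<Rightarrow> tens set" where
  "tspace n k = {\<Phi>. \<forall>S J. \<Phi> (S, J) \<noteq> 0 \<longrightarrow>
      S \<subseteq> {1..2*n} \<and> card S = k \<and> J \<subseteq> {1..n} \<and> even (card J)}"

definition csubspace :: "('a \<Rightarrow> complex) set \<Rightarrow> bool" where
  "csubspace U \<longleftrightarrow> (\<lambda>_. 0) \<in> U \<and> (\<forall>x\<in>U. \<forall>y\<in>U. (\<lambda>t. x t + y t) \<in> U)
      \<and> (\<forall>c. \<forall>x\<in>U. (\<lambda>t. c * x t) \<in> U)"

definition is_submodule :: "nat \<Rightarrow> nat \<Rightarrow> tens set \<Rightarrow> bool" where
  "is_submodule n k U \<longleftrightarrow> csubspace U \<and> U \<subseteq> tspace n k \<and>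
     (\<forall>a\<in>{1..2*n}. \<forall>b\<in>{1..2*n}. \<forall>\<Phi>\<in>U. trep n a b \<Phi> \<in> U)"

definition irreducible_sub :: "nat \<Rightarrow> nat \<Rightarrow> tens set \<Rightarrow> bool" where
  "irreducible_sub n k U \<longleftrightarrow> is_submodule n k U \<and> U \<noteq> {\<lambda>_. 0} \<and>
     (\<forall>U'. is_submodule n k U' \<and> U' \<subseteq> U \<longrightarrow> U' = {\<lambda>_. 0} \<or> U' = U)"

text \<open>Cartan subalgebra spanned by h_j = e_j \<and> f_j; the weight \<omega>_n + \<omega>_k
  takes the value 1/2 + [j \<le> k] on h_j. Positive root vectors (Bourbaki D_n):
  e_a \<and> f_b (root \<epsilon>_a - \<epsilon>_b) and e_a \<and> e_b (root \<epsilon>_a + \<epsilon>_b), a < b.\<close>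
definition hw_vector :: "nat \<Rightarrow> nat \<Rightarrow> tens \<Rightarrow> bool" where
  "hw_vector n k v \<longleftrightarrow> v \<noteq> (\<lambda>_. 0) \<and>
     (\<forall>j\<in>{1..n}. trep n j (n + j) v =
        (\<lambda>x. (1/2 + (if j \<le> k then 1 else 0)) * v x)) \<and>
     (\<forall>a b. 1 \<le> a \<and> a < b \<and> b \<le> n \<longrightarrow>
        trep n a (n + b) v = (\<lambda>_. 0) \<and> trep n a b v = (\<lambda>_. 0))"

definition cartan_component :: "nat \<Rightarrow> nat \<Rightarrow> tens set \<Rightarrow> bool" where
  "cartan_component n k W \<longleftrightarrow> irreducible_sub n k W \<and> (\<exists>v\<in>W. hw_vector n k v)"

definition inv_complement :: "nat \<Rightarrow> nat \<Rightarrow> tens set \<Rightarrow> tens set \<Rightarrow> bool" where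
  "inv_complement n k W U \<longleftrightarrow> is_submodule n k U \<and> W \<inter> U = {\<lambda>_. 0} \<and>
     (\<forall>\<Phi>\<in>tspace n k. \<exists>w\<in>W. \<exists>u\<in>U. \<Phi> = (\<lambda>t. w t + u t))"

text \<open>the equivariant projection of \<psi> onto W (along the invariant complement) is nonzero\<close>
definition proj_nonzero :: "nat \<Rightarrow> nat \<Rightarrow> tens set \<Rightarrow> tens \<Rightarrow> bool" where
  "proj_nonzero n k W \<psi> \<longleftrightarrow> (\<forall>U. inv_complement n k W U \<longrightarrow> \<psi> \<notin> U)"

text \<open>\<psi>_{2i,0} = sum over I, |I| = m-i, of e_I \<and> f_I \<otimes> 1; e_I \<and> f_I = b_(I \<union> (I+n))\<close>
definition psi :: "nat \<Rightarrow> nat \<Rightarrow> nat \<Rightarrow> tens" where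
  "psi n m i = (\<lambda>(S, J). if J = {} \<and>
      (\<exists>I. I \<subseteq> {1..n} \<and> card I = m - i \<and> S = I \<union> (\<lambda>x. x + n) ` I) then 1 else 0)"

end

theory Submission
  imports Defs
begin


lemma sgn_sq: "sgn_ins c T * sgn_ins c T = 1"
  by (simp add: sgn_ins_def power_mult_distrib[symmetric] flip: power_add)

lemma wedge_nz: "wedge_op c \<phi> S \<noteq> 0 \<Longrightarrow> c \<in> S \<and> \<phi> (S - {c}) \<noteq> 0"
  by (auto simp: wedge_op_def split: if_splits)
lemma contr_nz: "contr_op c \<phi> S \<noteq> 0 \<Longrightarrow> c \<notin> S \<and> \<phi> (insert c S) \<noteq> 0"
  by (auto simp: contr_op_def split: if_splits)

definition ev :: "nat \<Rightarrow> nat \<Rightarrow> nat set \<times> nat set \<Rightarrow> complex" where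
  "ev n j x = (if j \<in> fst x then 1 else 0) - (if n + j \<in> fst x then 1 else 0) + (if j \<in> snd x then 1 else 0) - 1/2"

lemma wc_same: "wedge_op j (contr_op j \<phi>) S = (if j \<in> S then \<phi> S else 0)"
  by (auto simp: wedge_op_def contr_op_def insert_absorb mult.assoc[symmetric] sgn_sq)
lemma cw_same: "contr_op j (wedge_op j \<phi>) S = (if j \<in> S then 0 else \<phi> S)"
  by (auto simp: wedge_op_def contr_op_def mult.assoc[symmetric] sgn_sq)

lemma h_action:
  assumes "1 \<le> j" "j \<le> n"
  shows "trep n j (n + j) \<Phi> = (\<lambda>x. ev n j x * \<Phi> x)"
proof
  fix x :: "nat set \<times> nat set"
  obtain S J where x: "x = (S, J)" by force
  have d1: "dual_idx n (n + j) = j" "dual_idx n j = n + j" using assms by (auto simp: dual_idx_def)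
  have c1: "cliff n j = wedge_op j" "cliff n (n + j) = (\<lambda>\<phi> S. 2 * contr_op j \<phi> S)"
    using assms by (auto simp: cliff_def)
  have cl: "contr_op j (\<lambda>S. 2 * \<phi> S) = (\<lambda>S. 2 * contr_op j \<phi> S)" 
    "wedge_op j (\<lambda>S. 2 * \<phi> S) = (\<lambda>S. 2 * wedge_op j \<phi> S)" for \<phi>
    by (auto simp: contr_op_def wedge_op_def)
  show "trep n j (n + j) \<Phi> x = ev n j x * \<Phi> x"
    unfolding x trep_def vrep_def srep_def d1 c1 cl
    by (simp add: wc_same cw_same ev_def algebra_simps)
qed



definition F :: "(nat set \<Rightarrow> real) \<Rightarrow> nat set \<Rightarrow> ext \<Rightarrow> ext \<Rightarrow> complex" where
  "F g A \<phi> \<psi> = (\<Sum>S\<in>Pow A. of_real (g S) * \<phi> S * cnj (\<psi> S))"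

lemma sgn_real: "cnj (sgn_ins c T) = sgn_ins c T"
  by (simp add: sgn_ins_def)

lemma F_wedge:
  assumes A: "finite A" "c \<in> A" and g: "\<And>T. T \<subseteq> A \<Longrightarrow> c \<notin> T \<Longrightarrow> g (insert c T) = \<mu> * g T"
  shows "F g A (wedge_op c \<phi>) \<psi> = F g A \<phi> (\<lambda>T. of_real \<mu> * contr_op c \<psi> T)"
proof -
  have "F g A (wedge_op c \<phi>) \<psi> = (\<Sum>S\<in>{S\<in>Pow A. c \<in> S}. of_real (g S) * (sgn_ins c (S - {c}) * \<phi> (S - {c})) * cnj (\<psi> S))"
    unfolding F_def wedge_op_def
    by (rule sum.mono_neutral_cong_right) (use A in \<open>auto simp: insert_absorb\<close>)
  also have "\<dots> = (\<Sum>T\<in>{T\<in>Pow A. c \<notin> T}. of_real (g (insert c T)) * (sgn_ins c T * \<phi> T) * cnj (\<psi> (insert c T)))"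
    by (rule sum.reindex_bij_witness[where i="insert c" and j="\<lambda>S. S - {c}"]) (use A in \<open>auto simp: insert_absorb\<close>)
  also have "\<dots> = F g A \<phi> (\<lambda>T. of_real \<mu> * contr_op c \<psi> T)"
    unfolding F_def contr_op_def
    by (rule sum.mono_neutral_cong_left) (use A in \<open>auto simp: g sgn_real\<close>)
  finally show ?thesis .
qed

lemma F_cnj: "F g A \<phi> \<psi> = cnj (F g A \<psi> \<phi>)"
  unfolding F_def by (simp add: mult.commute mult.left_commute)

lemma F_scale2: "F g A \<phi> (\<lambda>T. c * \<psi> T) = cnj c * F g A \<phi> \<psi>"
  unfolding F_def by (simp add: sum_distrib_left algebra_simps)
lemma F_scale1: "F g A (\<lambda>T. c * \<phi> T) \<psi> = c * F g A \<phi> \<psi>"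
  unfolding F_def by (simp add: sum_distrib_left algebra_simps)
lemma F_diff1: "F g A (\<lambda>T. \<phi>1 T - \<phi>2 T) \<psi> = F g A \<phi>1 \<psi> - F g A \<phi>2 \<psi>"
  unfolding F_def by (simp add: sum_subtractf algebra_simps)
lemma F_diff2: "F g A \<phi> (\<lambda>T. \<psi>1 T - \<psi>2 T) = F g A \<phi> \<psi>1 - F g A \<phi> \<psi>2"
  unfolding F_def by (simp add: sum_subtractf algebra_simps)

lemma F_contr:
  assumes A: "finite A" "c \<in> A" and g: "\<And>T. T \<subseteq> A \<Longrightarrow> c \<notin> T \<Longrightarrow> g (insert c T) = \<mu> * g T"
    and mu: "\<mu> \<noteq> 0"
  shows "F g A (contr_op c \<phi>) \<psi> = F g A \<phi> (\<lambda>T. of_real (1/\<mu>) * wedge_op c \<psi> T)"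
proof -
  have "F g A (wedge_op c \<psi>) \<phi> = of_real \<mu> * cnj (F g A (contr_op c \<phi>) \<psi>)"
    using F_wedge[where g=g and A=A and c=c and \<mu>=\<mu> and \<phi>=\<psi> and \<psi>=\<phi>, OF A g] by (simp add: F_scale2 F_cnj[of g A \<psi>])
  then have "F g A (contr_op c \<phi>) \<psi> = cnj (F g A (wedge_op c \<psi>) \<phi>) / of_real \<mu>"
    using mu by (simp add: field_simps)
  then show ?thesis by (simp add: F_scale2 F_cnj[of g A \<phi>] divide_inverse mult.commute)
qed



lemma dual_dual: "1 \<le> a \<Longrightarrow> a \<le> 2*n \<Longrightarrow> dual_idx n (dual_idx n a) = a"
  by (auto simp: dual_idx_def)
lemma dual_range: "1 \<le> a \<Longrightarrow> a \<le> 2*n \<Longrightarrow> 1 \<le> dual_idx n a \<and> dual_idx n a \<le> 2*n"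
  by (auto simp: dual_idx_def)

lemma F1_wedge: "c \<in> {1..2*n} \<Longrightarrow> F (\<lambda>_. 1) {1..2*n} (wedge_op c \<phi>) \<psi> = F (\<lambda>_. 1) {1..2*n} \<phi> (contr_op c \<psi>)"
  using F_wedge[where g="\<lambda>_. 1" and A="{1..2*n}" and c=c and \<mu>=1 and \<phi>=\<phi> and \<psi>=\<psi>] by simp
lemma F1_contr: "c \<in> {1..2*n} \<Longrightarrow> F (\<lambda>_. 1) {1..2*n} (contr_op c \<phi>) \<psi> = F (\<lambda>_. 1) {1..2*n} \<phi> (wedge_op c \<psi>)"
  using F_contr[where g="\<lambda>_. 1" and A="{1..2*n}" and c=c and \<mu>=1 and \<phi>=\<phi> and \<psi>=\<psi>] by simp

lemma vrep_adj:
  assumes "a \<in> {1..2*n}" "b \<in> {1..2*n}"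
  shows "F (\<lambda>_. 1) {1..2*n} (vrep n a b \<phi>) \<psi> = F (\<lambda>_. 1) {1..2*n} \<phi> (vrep n (dual_idx n b) (dual_idx n a) \<psi>)"
proof -
  have r: "dual_idx n a \<in> {1..2*n}" "dual_idx n b \<in> {1..2*n}" using assms dual_range by auto
  have dd: "dual_idx n (dual_idx n a) = a" "dual_idx n (dual_idx n b) = b" using assms dual_dual by auto
  show ?thesis
    unfolding vrep_def F_diff1 F_diff2 dd
    by (simp only: F1_wedge[OF assms(1)] F1_wedge[OF assms(2)] F1_contr[OF r(1)] F1_contr[OF r(2)])
qed

abbreviation Fs where "Fs n \<equiv> F (\<lambda>J. 2 ^ card J) {1..n}"

lemma Fs_wedge: "c \<in> {1..n} \<Longrightarrow> Fs n (wedge_op c \<phi>) \<psi> = Fs n \<phi> (\<lambda>T. 2 * contr_op c \<psi> T)"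
proof -
  assume c: "c \<in> {1..n}"
  have "\<And>T. T \<subseteq> {1..n} \<Longrightarrow> c \<notin> T \<Longrightarrow> (2::real) ^ card (insert c T) = 2 * 2 ^ card T"
    by (subst card_insert_disjoint) (auto intro: finite_subset)
  from F_wedge[where g="\<lambda>J. 2 ^ card J" and A="{1..n}" and c=c and \<mu>=2 and \<phi>=\<phi> and \<psi>=\<psi>, OF _ c this]
  show ?thesis by simp
qed
lemma Fs_contr: "c \<in> {1..n} \<Longrightarrow> Fs n (contr_op c \<phi>) \<psi> = Fs n \<phi> (\<lambda>T. (1/2) * wedge_op c \<psi> T)"
proof -
  assume c: "c \<in> {1..n}"
  have "\<And>T. T \<subseteq> {1..n} \<Longrightarrow> c \<notin> T \<Longrightarrow> (2::real) ^ card (insert c T) = 2 * 2 ^ card T"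
    by (subst card_insert_disjoint) (auto intro: finite_subset)
  from F_contr[where g="\<lambda>J. 2 ^ card J" and A="{1..n}" and c=c and \<mu>=2 and \<phi>=\<phi> and \<psi>=\<psi>, OF _ c this]
  show ?thesis by simp
qed

lemma cliff_adj:
  assumes "a \<in> {1..2*n}"
  shows "Fs n (cliff n a \<phi>) \<psi> = Fs n \<phi> (cliff n (dual_idx n a) \<psi>)"
proof (cases "a \<le> n")
  case True
  then have "cliff n a = wedge_op a" "cliff n (dual_idx n a) = (\<lambda>\<phi> S. 2 * contr_op a \<phi> S)"
    using assms by (auto simp: cliff_def dual_idx_def)
  moreover have "a \<in> {1..n}" using assms True by auto
  ultimately show ?thesis by (simp only: Fs_wedge)
next
  case False
  then have "cliff n a = (\<lambda>\<phi> S. 2 * contr_op (a - n) \<phi> S)" "cliff n (dual_idx n a) = wedge_op (a - n)"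
    using assms by (auto simp: cliff_def dual_idx_def)
  moreover have "a - n \<in> {1..n}" using assms False by auto
  ultimately show ?thesis by (simp only: F_scale1 Fs_contr F_scale2) simp
qed

lemma srep_adj:
  assumes "a \<in> {1..2*n}" "b \<in> {1..2*n}"
  shows "Fs n (srep n a b \<phi>) \<psi> = Fs n \<phi> (srep n (dual_idx n b) (dual_idx n a) \<psi>)"
proof -
  have r: "dual_idx n a \<in> {1..2*n}" "dual_idx n b \<in> {1..2*n}" using assms dual_range by auto
  show ?thesis
    unfolding srep_def F_scale1 F_scale2 F_diff1 F_diff2
    by (simp only: cliff_adj[OF assms(1)] cliff_adj[OF assms(2)] cliff_adj[OF r(1)] cliff_adj[OF r(2)]) simp
qed



definition TF :: "nat \<Rightarrow> tens \<Rightarrow> tens \<Rightarrow> complex" where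
  "TF n \<Phi> \<Psi> = (\<Sum>x\<in>Pow {1..2*n} \<times> Pow {1..n}. of_real (2 ^ card (snd x)) * \<Phi> x * cnj (\<Psi> x))"

lemma TF_split1:
  "TF n (\<lambda>(S,J). A S J + B S J) \<Psi> =
     (\<Sum>J\<in>Pow {1..n}. of_real (2 ^ card J) * F (\<lambda>_. 1) {1..2*n} (\<lambda>S. A S J) (\<lambda>S. \<Psi> (S,J)))
   + (\<Sum>S\<in>Pow {1..2*n}. Fs n (\<lambda>J. B S J) (\<lambda>J. \<Psi> (S,J)))"
proof -
  have "TF n (\<lambda>(S,J). A S J + B S J) \<Psi> = (\<Sum>S\<in>Pow {1..2*n}. \<Sum>J\<in>Pow {1..n}. of_real (2 ^ card J) * (A S J + B S J) * cnj (\<Psi> (S,J)))"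
    unfolding TF_def by (simp add: sum.cartesian_product split_def)
  also have "\<dots> = (\<Sum>S\<in>Pow {1..2*n}. \<Sum>J\<in>Pow {1..n}. of_real (2 ^ card J) * A S J * cnj (\<Psi> (S,J)))
      + (\<Sum>S\<in>Pow {1..2*n}. \<Sum>J\<in>Pow {1..n}. of_real (2 ^ card J) * B S J * cnj (\<Psi> (S,J)))"
    by (simp add: sum.distrib[symmetric] algebra_simps)
  also have "(\<Sum>S\<in>Pow {1..2*n}. \<Sum>J\<in>Pow {1..n}. of_real (2 ^ card J) * A S J * cnj (\<Psi> (S,J)))
     = (\<Sum>J\<in>Pow {1..n}. of_real (2 ^ card J) * F (\<lambda>_. 1) {1..2*n} (\<lambda>S. A S J) (\<lambda>S. \<Psi> (S,J)))"
    by (subst sum.swap) (simp add: F_def sum_distrib_left algebra_simps)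
  also have "(\<Sum>S\<in>Pow {1..2*n}. \<Sum>J\<in>Pow {1..n}. of_real (2 ^ card J) * B S J * cnj (\<Psi> (S,J)))
     = (\<Sum>S\<in>Pow {1..2*n}. Fs n (\<lambda>J. B S J) (\<lambda>J. \<Psi> (S,J)))"
    by (simp add: F_def)
  finally show ?thesis .
qed

lemma TF_split2:
  "TF n \<Phi> (\<lambda>(S,J). A S J + B S J) =
     (\<Sum>J\<in>Pow {1..n}. of_real (2 ^ card J) * F (\<lambda>_. 1) {1..2*n} (\<lambda>S. \<Phi> (S,J)) (\<lambda>S. A S J))
   + (\<Sum>S\<in>Pow {1..2*n}. Fs n (\<lambda>J. \<Phi> (S,J)) (\<lambda>J. B S J))"
proof -
  have "TF n \<Phi> (\<lambda>(S,J). A S J + B S J) = (\<Sum>S\<in>Pow {1..2*n}. \<Sum>J\<in>Pow {1..n}. of_real (2 ^ card J) * \<Phi> (S,J) * cnj (A S J + B S J))"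
    unfolding TF_def by (simp add: sum.cartesian_product split_def)
  also have "\<dots> = (\<Sum>S\<in>Pow {1..2*n}. \<Sum>J\<in>Pow {1..n}. of_real (2 ^ card J) * \<Phi> (S,J) * cnj (A S J))
      + (\<Sum>S\<in>Pow {1..2*n}. \<Sum>J\<in>Pow {1..n}. of_real (2 ^ card J) * \<Phi> (S,J) * cnj (B S J))"
    by (simp add: sum.distrib[symmetric] algebra_simps)
  also have "(\<Sum>S\<in>Pow {1..2*n}. \<Sum>J\<in>Pow {1..n}. of_real (2 ^ card J) * \<Phi> (S,J) * cnj (A S J))
     = (\<Sum>J\<in>Pow {1..n}. of_real (2 ^ card J) * F (\<lambda>_. 1) {1..2*n} (\<lambda>S. \<Phi> (S,J)) (\<lambda>S. A S J))"
    by (subst sum.swap) (simp add: F_def sum_distrib_left algebra_simps)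
  also have "(\<Sum>S\<in>Pow {1..2*n}. \<Sum>J\<in>Pow {1..n}. of_real (2 ^ card J) * \<Phi> (S,J) * cnj (B S J))
     = (\<Sum>S\<in>Pow {1..2*n}. Fs n (\<lambda>J. \<Phi> (S,J)) (\<lambda>J. B S J))"
    by (simp add: F_def)
  finally show ?thesis .
qed

lemma trep_eq: "trep n a b \<Phi> = (\<lambda>(S,J). vrep n a b (\<lambda>S'. \<Phi> (S', J)) S + srep n a b (\<lambda>J'. \<Phi> (S, J')) J)"
  by (simp add: trep_def)

lemma trep_adj:
  assumes "a \<in> {1..2*n}" "b \<in> {1..2*n}"
  shows "TF n (trep n a b \<Phi>) \<Psi> = TF n \<Phi> (trep n (dual_idx n b) (dual_idx n a) \<Psi>)"
  unfolding trep_eq TF_split1 TF_split2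
  by (simp only: vrep_adj[OF assms] srep_adj[OF assms])



lemma vrep_nz:
  assumes "vrep n a b \<phi> S \<noteq> 0"
  shows "\<exists>c d. c \<in> {a,b} \<and> d \<in> {dual_idx n a, dual_idx n b} \<and> c \<in> S \<and> d \<notin> S - {c} \<and> \<phi> (insert d (S - {c})) \<noteq> 0"
proof -
  have "wedge_op a (contr_op (dual_idx n b) \<phi>) S \<noteq> 0 \<or> wedge_op b (contr_op (dual_idx n a) \<phi>) S \<noteq> 0"
    using assms unfolding vrep_def by auto
  then show ?thesis
    by (auto dest!: wedge_nz contr_nz)
qed

lemma cliff_nz:
  assumes "cliff n x \<chi> J \<noteq> 0" "x \<in> {1..2*n}"
  shows "\<exists>J'. \<chi> J' \<noteq> 0 \<and> (J' \<subseteq> {1..n} \<longrightarrow> J \<subseteq> {1..n} \<and> (even (card J) \<longleftrightarrow> odd (card J')))"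
proof (cases "x \<le> n")
  case True
  then have "wedge_op x \<chi> J \<noteq> 0" using assms by (simp add: cliff_def)
  then have h: "x \<in> J" "\<chi> (J - {x}) \<noteq> 0" by (auto dest: wedge_nz)
  show ?thesis
  proof (intro exI conjI impI)
    show "\<chi> (J - {x}) \<noteq> 0" by fact
    assume s: "J - {x} \<subseteq> {1..n}"
    then show "J \<subseteq> {1..n}" using True assms(2) h by auto
    then have "finite J" by (rule finite_subset) auto
    then have "card J = Suc (card (J - {x}))" using h(1) by (metis card_Suc_Diff1)
    then show "even (card J) \<longleftrightarrow> odd (card (J - {x}))" by simp
  qed
next
  case False
  then have "contr_op (x - n) \<chi> J \<noteq> 0" using assms by (simp add: cliff_def)
  then have h: "x - n \<notin> J" "\<chi> (insert (x - n) J) \<noteq> 0" by (auto dest: contr_nz)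
  show ?thesis
  proof (intro exI conjI impI)
    show "\<chi> (insert (x - n) J) \<noteq> 0" by fact
    assume s: "insert (x - n) J \<subseteq> {1..n}"
    then show "J \<subseteq> {1..n}" by auto
    then have "finite J" by (rule finite_subset) auto
    then have "card (insert (x - n) J) = Suc (card J)" using h(1) by simp
    then show "even (card J) \<longleftrightarrow> odd (card (insert (x - n) J))" by simp
  qed
qed

lemma srep_nz:
  assumes "srep n a b \<psi> J \<noteq> 0"
  shows "\<exists>x y. x \<in> {a,b} \<and> y \<in> {a,b} \<and> cliff n x (cliff n y \<psi>) J \<noteq> 0"
  using assms unfolding srep_def by (cases "cliff n a (cliff n b \<psi>) J = 0") auto

lemma trep_tspace:
  assumes \<Phi>: "\<Phi> \<in> tspace n k" and ab: "a \<in> {1..2*n}" "b \<in> {1..2*n}"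
  shows "trep n a b \<Phi> \<in> tspace n k"
  unfolding tspace_def
proof (intro CollectI allI impI)
  fix S J assume nz: "trep n a b \<Phi> (S, J) \<noteq> 0"
  have P: "\<Phi> (S', J') \<noteq> 0 \<Longrightarrow> S' \<subseteq> {1..2*n} \<and> card S' = k \<and> J' \<subseteq> {1..n} \<and> even (card J')" for S' J'
    using \<Phi> unfolding tspace_def by blast
  from nz have "vrep n a b (\<lambda>S'. \<Phi> (S', J)) S \<noteq> 0 \<or> srep n a b (\<lambda>J'. \<Phi> (S, J')) J \<noteq> 0"
    unfolding trep_def by auto
  then show "S \<subseteq> {1..2*n} \<and> card S = k \<and> J \<subseteq> {1..n} \<and> even (card J)"
  proof
    assume "vrep n a b (\<lambda>S'. \<Phi> (S', J)) S \<noteq> 0"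
    then obtain c d where cd: "c \<in> {a,b}" "d \<in> {dual_idx n a, dual_idx n b}" "c \<in> S" "d \<notin> S - {c}"
      "\<Phi> (insert d (S - {c}), J) \<noteq> 0" by (blast dest: vrep_nz)
    from P[OF cd(5)] have h: "insert d (S - {c}) \<subseteq> {1..2*n}" "card (insert d (S - {c})) = k"
      "J \<subseteq> {1..n}" "even (card J)" by auto
    have fin: "finite (S - {c})" using h(1) by (meson finite_atLeastAtMost finite_insert finite_subset)
    then have finS: "finite S" by simp
    have "card S = Suc (card (S - {c}))" using finS cd(3) by (metis card_Suc_Diff1)
    moreover have "card (insert d (S - {c})) = Suc (card (S - {c}))" using fin cd(4) by simp
    ultimately have "card S = k" using h(2) by simp
    moreover have "S \<subseteq> {1..2*n}" using h(1) cd(1,3) ab by auto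
    ultimately show ?thesis using h by auto
  next
    assume "srep n a b (\<lambda>J'. \<Phi> (S, J')) J \<noteq> 0"
    then obtain x y where xy: "x \<in> {a,b}" "y \<in> {a,b}" "cliff n x (cliff n y (\<lambda>J'. \<Phi> (S, J'))) J \<noteq> 0"
      by (blast dest: srep_nz)
    have x: "x \<in> {1..2*n}" and y: "y \<in> {1..2*n}" using xy ab by auto
    obtain J1 where J1: "cliff n y (\<lambda>J'. \<Phi> (S, J')) J1 \<noteq> 0"
      "J1 \<subseteq> {1..n} \<longrightarrow> J \<subseteq> {1..n} \<and> (even (card J) \<longleftrightarrow> odd (card J1))"
      using cliff_nz[OF xy(3) x] by blast
    obtain J2 where J2: "\<Phi> (S, J2) \<noteq> 0"
      "J2 \<subseteq> {1..n} \<longrightarrow> J1 \<subseteq> {1..n} \<and> (even (card J1) \<longleftrightarrow> odd (card J2))"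
      using cliff_nz[OF J1(1) y] by blast
    from P[OF J2(1)] J2(2) J1(2) show ?thesis by auto
  qed
qed



lemma csubspace_tspace: "csubspace (tspace n k)"
  unfolding csubspace_def
proof (intro conjI ballI allI)
  show "(\<lambda>_. 0) \<in> tspace n k" by (simp add: tspace_def)
  fix x y assume x: "x \<in> tspace n k" and y: "y \<in> tspace n k"
  show "(\<lambda>t. x t + y t) \<in> tspace n k"
    unfolding tspace_def mem_Collect_eq
  proof (intro allI impI)
    fix S J assume nz: "x (S, J) + y (S, J) \<noteq> 0"
    then have "x (S,J) \<noteq> 0 \<or> y (S,J) \<noteq> 0" by (cases "x (S,J) = 0") auto
    then show "S \<subseteq> {1..2 * n} \<and> card S = k \<and> J \<subseteq> {1..n} \<and> even (card J)"
      using x y unfolding tspace_def by blast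
  qed
next
  fix c x assume x: "x \<in> tspace n k"
  show "(\<lambda>t. c * x t) \<in> tspace n k"
    unfolding tspace_def mem_Collect_eq
  proof (intro allI impI)
    fix S J assume nz: "c * x (S, J) \<noteq> 0"
    then have "x (S,J) \<noteq> 0" by auto
    then show "S \<subseteq> {1..2 * n} \<and> card S = k \<and> J \<subseteq> {1..n} \<and> even (card J)"
      using x unfolding tspace_def by blast
  qed
qed

lemma submodule_tspace: "is_submodule n k (tspace n k)"
  unfolding is_submodule_def using csubspace_tspace trep_tspace by blast

lemma submodule_Int: "is_submodule n k U \<Longrightarrow> is_submodule n k V \<Longrightarrow> is_submodule n k (U \<inter> V)"
proof -
  assume U: "is_submodule n k U" and V: "is_submodule n k V"
  show ?thesis unfolding is_submodule_def csubspace_def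
  proof (intro conjI allI ballI)
    show "(\<lambda>_. 0) \<in> U \<inter> V" using U V unfolding is_submodule_def csubspace_def by simp
    show "U \<inter> V \<subseteq> tspace n k" using U unfolding is_submodule_def by auto
  next
    fix x y assume "x \<in> U \<inter> V" "y \<in> U \<inter> V"
    then show "(\<lambda>t. x t + y t) \<in> U \<inter> V" using U V unfolding is_submodule_def csubspace_def by simp
  next
    fix c x assume "x \<in> U \<inter> V"
    then show "(\<lambda>t. c * x t) \<in> U \<inter> V" using U V unfolding is_submodule_def csubspace_def by simp
  next
    fix a b x assume "a \<in> {1..2*n}" "b \<in> {1..2*n}" "x \<in> U \<inter> V"
    then show "trep n a b x \<in> U \<inter> V" using U V unfolding is_submodule_def by simp
  qed
qed

lemma TF_self_zero:
  assumes "\<Phi> \<in> tspace n k" "TF n \<Phi> \<Phi> = 0"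
  shows "\<Phi> = (\<lambda>_. 0)"
proof
  fix x
  let ?A = "Pow {1..2*n} \<times> Pow {1..n}"
  have eq: "TF n \<Phi> \<Phi> = of_real (\<Sum>x\<in>?A. 2 ^ card (snd x) * (cmod (\<Phi> x))\<^sup>2)"
    unfolding TF_def of_real_sum of_real_mult complex_norm_square by (simp add: mult.assoc)
  have "complex_of_real (\<Sum>x\<in>?A. 2 ^ card (snd x) * (cmod (\<Phi> x))\<^sup>2) = 0"
    by (simp only: eq[symmetric] assms(2))
  then have "(\<Sum>x\<in>?A. 2 ^ card (snd x) * (cmod (\<Phi> x))\<^sup>2) = 0" by (simp only: of_real_eq_0_iff)
  then have z: "\<forall>x\<in>?A. 2 ^ card (snd x) * (cmod (\<Phi> x))\<^sup>2 = (0::real)"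
    by (subst (asm) sum_nonneg_eq_0_iff) auto
  show "\<Phi> x = 0"
  proof (rule ccontr)
    assume nz: "\<Phi> x \<noteq> 0"
    obtain S J where x: "x = (S,J)" by force
    have "x \<in> ?A" using assms(1) nz unfolding tspace_def x by auto
    with z nz show False by auto
  qed
qed

definition Perp :: "nat \<Rightarrow> nat \<Rightarrow> tens set \<Rightarrow> tens set" where
  "Perp n k U = {\<Psi> \<in> tspace n k. \<forall>\<Phi>\<in>U. TF n \<Phi> \<Psi> = 0}"

lemma TF_zero2: "TF n \<Phi> (\<lambda>_. 0) = 0" by (simp add: TF_def)
lemma TF_add2: "TF n \<Phi> (\<lambda>t. x t + y t) = TF n \<Phi> x + TF n \<Phi> y"
  by (simp add: TF_def sum.distrib algebra_simps)
lemma TF_scale2: "TF n \<Phi> (\<lambda>t. c * x t) = cnj c * TF n \<Phi> x"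
  by (simp add: TF_def sum_distrib_left algebra_simps)

lemma submodule_Perp:
  assumes U: "is_submodule n k U"
  shows "is_submodule n k (Perp n k U)"
  unfolding is_submodule_def
proof (intro conjI ballI)
  have cs: "csubspace (tspace n k)" by (rule csubspace_tspace)
  show "csubspace (Perp n k U)"
    using cs unfolding csubspace_def Perp_def by (auto simp: TF_zero2 TF_add2 TF_scale2)
  show "Perp n k U \<subseteq> tspace n k" unfolding Perp_def by auto
  fix a b \<Psi> assume ab: "a \<in> {1..2*n}" "b \<in> {1..2*n}" and P: "\<Psi> \<in> Perp n k U"
  have r: "dual_idx n a \<in> {1..2*n}" "dual_idx n b \<in> {1..2*n}" using ab dual_range by auto
  have dd: "dual_idx n (dual_idx n a) = a" "dual_idx n (dual_idx n b) = b" using ab dual_dual by auto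
  have "trep n a b \<Psi> \<in> tspace n k" using P ab trep_tspace unfolding Perp_def by auto
  moreover have "TF n \<Phi> (trep n a b \<Psi>) = 0" if "\<Phi> \<in> U" for \<Phi>
  proof -
    have "trep n (dual_idx n b) (dual_idx n a) \<Phi> \<in> U" using U that r unfolding is_submodule_def by auto
    then have "TF n (trep n (dual_idx n b) (dual_idx n a) \<Phi>) \<Psi> = 0" using P unfolding Perp_def by auto
    then show ?thesis using trep_adj[OF r(2) r(1), of \<Phi> \<Psi>] dd by simp
  qed
  ultimately show "trep n a b \<Psi> \<in> Perp n k U" unfolding Perp_def by auto
qed

definition x0 :: "nat \<Rightarrow> nat \<Rightarrow> nat set \<times> nat set" where "x0 n k = ({1..k}, {1..n})"
definition v0 :: "nat \<Rightarrow> nat \<Rightarrow> tens" where "v0 n k = (\<lambda>x. if x = x0 n k then 1 else 0)"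

lemma TF_v0: "k \<le> 2*n \<Longrightarrow> TF n \<Phi> (v0 n k) = 2 ^ n * \<Phi> (x0 n k)"
proof -
  assume k: "k \<le> 2*n"
  have "TF n \<Phi> (v0 n k) = (\<Sum>x\<in>Pow {1..2*n} \<times> Pow {1..n}. if x = x0 n k then of_real (2 ^ card (snd x)) * \<Phi> x else 0)"
    unfolding TF_def v0_def by (intro sum.cong) auto
  also have "\<dots> = of_real (2 ^ card (snd (x0 n k))) * \<Phi> (x0 n k)"
    using k by (subst sum.delta) (auto simp: x0_def)
  finally show ?thesis by (simp add: x0_def)
qed

lemma v0_tspace: "k \<le> n \<Longrightarrow> even n \<Longrightarrow> v0 n k \<in> tspace n k"
  unfolding tspace_def v0_def x0_def by auto

lemma v0_nz: "v0 n k \<noteq> (\<lambda>_. 0)"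
  unfolding v0_def by (metis zero_neq_one)



definition lam :: "nat \<Rightarrow> nat \<Rightarrow> complex" where "lam k j = 1/2 + (if j \<le> k then 1 else 0)"
definition r3 :: "nat \<Rightarrow> nat \<Rightarrow> complex" where "r3 k j = (if j \<le> k then 1/2 else 3/2)"
definition pf :: "nat \<Rightarrow> nat \<Rightarrow> nat \<Rightarrow> nat set \<times> nat set \<Rightarrow> complex" where
  "pf n k j x = (ev n j x + 3/2) * (ev n j x + 1/2) * (ev n j x - r3 k j)"

lemma ev_cases: "ev n j x = -3/2 \<or> ev n j x = -1/2 \<or> ev n j x = 1/2 \<or> ev n j x = 3/2"
  unfolding ev_def by (cases "j \<in> fst x"; cases "n + j \<in> fst x"; cases "j \<in> snd x") auto

lemma pf_nz: "pf n k j x \<noteq> 0 \<Longrightarrow> ev n j x = lam k j"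
  using ev_cases[of n j x] unfolding pf_def lam_def r3_def by (cases "j \<le> k") auto

lemma pf_lam: assumes "ev n j x = lam k j" shows "pf n k j x \<noteq> 0"
proof -
  have "pf n k j x = (lam k j + 3/2) * (lam k j + 1/2) * (lam k j - r3 k j)"
    unfolding pf_def assms ..
  also have "\<dots> \<noteq> 0" unfolding lam_def r3_def by (cases "j \<le> k") simp_all
  finally show ?thesis .
qed

lemma ev_lam_hi:
  assumes "ev n j (S,J) = 3/2" shows "j \<in> S" "j \<in> J" "n + j \<notin> S"
  using assms unfolding ev_def by (cases "j \<in> S"; cases "n + j \<in> S"; cases "j \<in> J"; auto)+

lemma ev_lam_lo:
  assumes "ev n j (S,J) = 1/2" "j \<notin> S" "n + j \<notin> S" shows "j \<in> J"
  using assms unfolding ev_def by (cases "j \<in> J") auto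

lemma KL:
  assumes S: "S \<subseteq> {1..2*n}" "card S = k" and J: "J \<subseteq> {1..n}" and k: "k \<le> n"
    and w: "\<forall>j\<in>{1..n}. ev n j (S,J) = lam k j"
  shows "(S, J) = x0 n k"
proof -
  have sub: "{1..k} \<subseteq> S"
  proof
    fix j assume j: "j \<in> {1..k}"
    then have "ev n j (S,J) = 3/2" using w k by (auto simp: lam_def)
    then show "j \<in> S" by (rule ev_lam_hi)
  qed
  have finS: "finite S" using S(1) by (rule finite_subset) auto
  have Seq: "S = {1..k}" using card_subset_eq[OF finS sub] S(2) by simp
  have "{1..n} \<subseteq> J"
  proof
    fix j assume j: "j \<in> {1..n}"
    show "j \<in> J"
    proof (cases "j \<le> k")
      case True
      then have "ev n j (S,J) = 3/2" using w j by (auto simp: lam_def)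
      then show ?thesis by (rule ev_lam_hi)
    next
      case False
      then have "ev n j (S,J) = 1/2" using w j by (auto simp: lam_def)
      moreover have "j \<notin> S" "n + j \<notin> S" using False k j Seq by auto
      ultimately show ?thesis by (rule ev_lam_lo)
    qed
  qed
  then have "J = {1..n}" using J by auto
  then show ?thesis using Seq by (simp add: x0_def)
qed

lemma sub_ev:
  assumes U: "is_submodule n k U" and \<Phi>: "\<Phi> \<in> U" and j: "j \<in> {1..n}"
  shows "(\<lambda>x. (ev n j x - \<mu>) * \<Phi> x) \<in> U"
proof -
  have cs: "csubspace U" using U by (simp add: is_submodule_def)
  have A: "trep n j (n + j) \<Phi> \<in> U" using U \<Phi> j unfolding is_submodule_def by auto
  have B: "(\<lambda>t. (- \<mu>) * \<Phi> t) \<in> U" using cs \<Phi> unfolding csubspace_def by blast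
  have add: "\<forall>x\<in>U. \<forall>y\<in>U. (\<lambda>t. x t + y t) \<in> U" using cs unfolding csubspace_def by blast
  have "(\<lambda>t. trep n j (n + j) \<Phi> t + (- \<mu>) * \<Phi> t) \<in> U" using bspec[OF bspec[OF add A] B] by simp
  moreover have "(\<lambda>t. trep n j (n + j) \<Phi> t + (- \<mu>) * \<Phi> t) = (\<lambda>x. (ev n j x - \<mu>) * \<Phi> x)"
  proof -
    have "1 \<le> j" "j \<le> n" using j by auto
    then show ?thesis unfolding h_action[of j n \<Phi>, OF \<open>1 \<le> j\<close> \<open>j \<le> n\<close>] by (simp add: algebra_simps)
  qed
  ultimately show ?thesis by simp
qed

lemma sub_pf:
  assumes U: "is_submodule n k U" and \<Phi>: "\<Phi> \<in> U" and j: "j \<in> {1..n}"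
  shows "(\<lambda>x. pf n k j x * \<Phi> x) \<in> U"
proof -
  have "(\<lambda>x. (ev n j x - (-3/2)) * ((ev n j x - (-1/2)) * ((ev n j x - r3 k j) * \<Phi> x))) \<in> U"
    by (intro sub_ev[OF U _ j]) (rule \<Phi>)
  moreover have "(\<lambda>x. (ev n j x - (-3/2)) * ((ev n j x - (-1/2)) * ((ev n j x - r3 k j) * \<Phi> x))) = (\<lambda>x. pf n k j x * \<Phi> x)"
    unfolding pf_def by (rule ext) (simp add: field_simps)
  ultimately show ?thesis by simp
qed

lemma sub_prod:
  assumes U: "is_submodule n k U" and \<Phi>: "\<Phi> \<in> U"
  shows "finite X \<Longrightarrow> X \<subseteq> {1..n} \<Longrightarrow> (\<lambda>x. (\<Prod>j\<in>X. pf n k j x) * \<Phi> x) \<in> U"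
proof (induction X rule: finite_induct)
  case empty then show ?case using \<Phi> by simp
next
  case (insert j X)
  then have "(\<lambda>x. pf n k j x * ((\<Prod>j\<in>X. pf n k j x) * \<Phi> x)) \<in> U"
    by (intro sub_pf[OF U]) auto
  then show ?case using insert by (simp add: mult.assoc)
qed

lemma WP:
  assumes U: "is_submodule n k U" and \<Phi>: "\<Phi> \<in> U" and nz: "\<Phi> (x0 n k) \<noteq> 0" and k: "k \<le> n"
  shows "v0 n k \<in> U"
proof -
  let ?P = "\<lambda>x. \<Prod>j\<in>{1..n}. pf n k j x"
  have m: "(\<lambda>x. ?P x * \<Phi> x) \<in> U" by (rule sub_prod[OF U \<Phi>]) auto
  have ts: "\<Phi> \<in> tspace n k" using U \<Phi> unfolding is_submodule_def by auto
  have e0: "ev n j (x0 n k) = lam k j" if "j \<in> {1..n}" for j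
    using that k unfolding ev_def lam_def x0_def by auto
  have P0: "?P (x0 n k) \<noteq> 0" using pf_lam[OF e0] by simp
  let ?c = "?P (x0 n k) * \<Phi> (x0 n k)"
  have eq: "(\<lambda>x. ?P x * \<Phi> x) = (\<lambda>x. ?c * v0 n k x)"
  proof
    fix x
    show "?P x * \<Phi> x = ?c * v0 n k x"
    proof (cases "?P x * \<Phi> x = 0")
      case False
      then have a: "\<Phi> x \<noteq> 0" "?P x \<noteq> 0" by auto
      obtain S J where x: "x = (S,J)" by force
      from a(1) ts have "S \<subseteq> {1..2*n}" "card S = k" "J \<subseteq> {1..n}" unfolding tspace_def x by auto
      moreover from a(2) have "\<forall>j\<in>{1..n}. ev n j (S,J) = lam k j" using pf_nz unfolding x by auto
      ultimately have "x = x0 n k" using KL k x by blast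
      then show ?thesis by (simp add: v0_def)
    next
      case True
      then show ?thesis
      proof (cases "x = x0 n k")
        case True
        then show ?thesis using P0 nz \<open>?P x * \<Phi> x = 0\<close> by simp
      qed (simp add: v0_def)
    qed
  qed
  have cs: "csubspace U" using U by (simp add: is_submodule_def)
  have sc: "\<forall>c. \<forall>x\<in>U. (\<lambda>t. c * x t) \<in> U" using cs unfolding csubspace_def by blast
  have m2: "(\<lambda>x. ?c * v0 n k x) \<in> U" using m eq by simp
  have "(\<lambda>t. (1 / ?c) * (?c * v0 n k t)) \<in> U" using bspec[OF spec[OF sc, of "1 / ?c"] m2] by simp
  moreover have "?c \<noteq> 0" using P0 nz by simp
  ultimately show ?thesis by simp
qed



definition Y :: "nat \<Rightarrow> nat \<Rightarrow> tens \<Rightarrow> tens" where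
  "Y n s = trep n (n + 2*s + 2) (n + 2*s + 1)"

definition VYf :: "nat \<Rightarrow> nat \<Rightarrow> ext \<Rightarrow> ext" where
  "VYf n s \<phi> S =
    (if n+2*s+2 \<in> S \<and> 2*s+1 \<notin> S then sgn_ins (n+2*s+2) (S - {n+2*s+2}) * sgn_ins (2*s+1) (S - {n+2*s+2})
        * \<phi> (insert (2*s+1) (S - {n+2*s+2})) else 0)
  - (if n+2*s+1 \<in> S \<and> 2*s+2 \<notin> S then sgn_ins (n+2*s+1) (S - {n+2*s+1}) * sgn_ins (2*s+2) (S - {n+2*s+1})
        * \<phi> (insert (2*s+2) (S - {n+2*s+1})) else 0)"

definition SYf :: "nat \<Rightarrow> ext \<Rightarrow> ext" where
  "SYf s \<psi> J = (if 2*s+1 \<notin> J \<and> 2*s+2 \<notin> J then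
      (sgn_ins (2*s+2) J * sgn_ins (2*s+1) (insert (2*s+2) J) - sgn_ins (2*s+1) J * sgn_ins (2*s+2) (insert (2*s+1) J))
      * \<psi> (insert (2*s+1) (insert (2*s+2) J)) else 0)"

lemma Y_eq:
  assumes "2*s+2 \<le> n"
  shows "Y n s \<Phi> (S,J) = VYf n s (\<lambda>S'. \<Phi> (S',J)) S + SYf s (\<lambda>J'. \<Phi> (S,J')) J"
proof -
  have d: "dual_idx n (n + 2*s + 1) = 2*s+1" "dual_idx n (n + 2*s + 2) = 2*s+2" by (auto simp: dual_idx_def)
  have c: "cliff n (n + 2*s + 2) = (\<lambda>\<phi> S. 2 * contr_op (2*s+2) \<phi> S)"
          "cliff n (n + 2*s + 1) = (\<lambda>\<phi> S. 2 * contr_op (2*s+1) \<phi> S)" by (auto simp: cliff_def)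
  have cl: "contr_op j (\<lambda>S. 2 * \<phi> S) = (\<lambda>S. 2 * contr_op j \<phi> S)" for j \<phi>
    by (auto simp: contr_op_def)
  have v: "vrep n (n + 2*s + 2) (n + 2*s + 1) \<phi> S = VYf n s \<phi> S" for \<phi>
    unfolding vrep_def d VYf_def wedge_op_def contr_op_def using assms by auto
  have sr: "srep n (n + 2*s + 2) (n + 2*s + 1) \<psi> J = SYf s \<psi> J" for \<psi>
    unfolding srep_def c cl SYf_def contr_op_def by (auto simp: insert_commute algebra_simps)
  show ?thesis unfolding Y_def trep_def using v sr by simp
qed

lemma sgn_all: "(\<forall>t\<in>T. t < c) \<Longrightarrow> sgn_ins c T = (-1) ^ card T"
  unfolding sgn_ins_def by (metis (no_types, lifting) Collect_cong Collect_mem_eq)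

lemma SY_lo: "SYf s \<psi> {1..2*s} = 2 * \<psi> {1..2*s+2}"
proof -
  have i: "insert (2*s+1) (insert (2*s+2) {1..2*s}) = {1..2*s+2}" by auto
  have s1: "sgn_ins (2*s+2) {1..2*s} = 1" by (subst sgn_all) auto
  have s2: "sgn_ins (2*s+1) (insert (2*s+2) {1..2*s}) = 1"
  proof -
    have "{t \<in> insert (2*s+2) {1..2*s}. t < 2*s+1} = {1..2*s}" by auto
    then show ?thesis unfolding sgn_ins_def by simp
  qed
  have s3: "sgn_ins (2*s+1) {1..2*s} = 1" by (subst sgn_all) auto
  have s4: "sgn_ins (2*s+2) (insert (2*s+1) {1..2*s}) = -1"
  proof -
    have "insert (2*s+1) {1..2*s} = {1..2*s+1}" by auto
    then show ?thesis by (subst sgn_all) auto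
  qed
  show ?thesis unfolding SYf_def i s1 s2 s3 s4 by simp
qed

lemma SY_hi: "SYf s \<psi> {1..2*s+2} = 0"
  unfolding SYf_def by auto

lemma SY_J: "(2*s+1 \<notin> (J::nat set) \<and> 2*s+2 \<notin> J \<and> insert (2*s+1) (insert (2*s+2) J) = {1..2*s+2}) \<longleftrightarrow> J = {1..2*s}"
proof
  assume h: "2*s+1 \<notin> J \<and> 2*s+2 \<notin> J \<and> insert (2*s+1) (insert (2*s+2) J) = {1..2*s+2}"
  show "J = {1..2*s}"
  proof
    show "J \<subseteq> {1..2*s}"
    proof
      fix x assume "x \<in> J"
      then have "x \<in> {1..2*s+2}" "x \<noteq> 2*s+1" "x \<noteq> 2*s+2" using h by blast+
      then show "x \<in> {1..2*s}" by auto
    qed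
    show "{1..2*s} \<subseteq> J"
    proof
      fix x assume x: "x \<in> {1..2*s}"
      then have "x \<in> insert (2*s+1) (insert (2*s+2) J)" using h by auto
      then show "x \<in> J" using x by auto
    qed
  qed
qed auto



definition Pt :: "nat \<Rightarrow> nat \<Rightarrow> nat set \<Rightarrow> bool" where
  "Pt r t C \<longleftrightarrow> C \<subseteq> {2*t+1..2*r} \<and> (\<forall>u. t < u \<and> u \<le> r \<longrightarrow> (2*u-1 \<in> C \<longleftrightarrow> 2*u \<notin> C))"

definition FormS :: "nat \<Rightarrow> nat \<Rightarrow> nat set \<Rightarrow> nat set" where
  "FormS n t C = {1..2*t} \<union> C \<union> (\<lambda>x. x + n) ` C"

definition Fm :: "nat \<Rightarrow> nat \<Rightarrow> nat \<Rightarrow> nat set \<Rightarrow> bool" where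
  "Fm n r t S \<longleftrightarrow> (\<exists>C. Pt r t C \<and> S = FormS n t C)"

lemma Pt_step:
  assumes "Pt r s C" "s < r"
  shows "(2*s+1 \<in> C \<longleftrightarrow> 2*s+2 \<notin> C)"
    and "2*s+1 \<in> C \<Longrightarrow> Pt r (s+1) (C - {2*s+1})"
    and "2*s+2 \<in> C \<Longrightarrow> Pt r (s+1) (C - {2*s+2})"
proof -
  have a: "C \<subseteq> {2*s+1..2*r}" and b: "\<And>u. s < u \<Longrightarrow> u \<le> r \<Longrightarrow> (2*u-1 \<in> C \<longleftrightarrow> 2*u \<notin> C)"
    using assms(1) unfolding Pt_def by auto
  from b[of "s+1"] assms(2) show c: "(2*s+1 \<in> C \<longleftrightarrow> 2*s+2 \<notin> C)" by auto
  show "Pt r (s+1) (C - {2*s+1})" if "2*s+1 \<in> C"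
    unfolding Pt_def
  proof (intro conjI allI impI)
    show "C - {2*s+1} \<subseteq> {2*(s+1)+1..2*r}"
    proof
      fix x assume "x \<in> C - {2*s+1}"
      then have "x \<in> {2*s+1..2*r}" "x \<noteq> 2*s+1" "x \<noteq> 2*s+2" using a c that by auto
      then show "x \<in> {2*(s+1)+1..2*r}" by auto
    qed
    fix u assume "s + 1 < u \<and> u \<le> r"
    then show "(2*u-1 \<in> C - {2*s+1}) = (2*u \<notin> C - {2*s+1})" using b[of u] by auto
  qed
  show "Pt r (s+1) (C - {2*s+2})" if "2*s+2 \<in> C"
    unfolding Pt_def
  proof (intro conjI allI impI)
    show "C - {2*s+2} \<subseteq> {2*(s+1)+1..2*r}"
    proof
      fix x assume "x \<in> C - {2*s+2}"
      then have "x \<in> {2*s+1..2*r}" "x \<noteq> 2*s+1" "x \<noteq> 2*s+2" using a c that by auto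
      then show "x \<in> {2*(s+1)+1..2*r}" by auto
    qed
    fix u assume "s + 1 < u \<and> u \<le> r"
    then show "(2*u-1 \<in> C - {2*s+2}) = (2*u \<notin> C - {2*s+2})" using b[of u] by auto
  qed
qed

lemma Pt_card: "Pt r t C \<Longrightarrow> card C = r - t"
proof (induction "r - t" arbitrary: t C)
  case 0
  then have "C = {}" unfolding Pt_def by auto
  then show ?case using 0 by simp
next
  case (Suc d)
  then have tr: "t < r" by simp
  have fin: "finite C" using Suc.prems unfolding Pt_def by (auto intro: finite_subset)
  show ?case
  proof (cases "2*t+1 \<in> C")
    case True
    have "Pt r (t+1) (C - {2*t+1})" using Pt_step(2)[OF Suc.prems tr True] .
    then have "card (C - {2*t+1}) = r - (t+1)" using Suc.hyps(1)[of "t+1"] Suc.hyps(2) by simp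
    then show ?thesis using card_Suc_Diff1[OF fin True] tr by simp
  next
    case False
    then have True': "2*t+2 \<in> C" using Pt_step(1)[OF Suc.prems tr] by simp
    have "Pt r (t+1) (C - {2*t+2})" using Pt_step(3)[OF Suc.prems tr True'] .
    then have "card (C - {2*t+2}) = r - (t+1)" using Suc.hyps(1)[of "t+1"] Suc.hyps(2) by simp
    then show ?thesis using card_Suc_Diff1[OF fin True'] tr by simp
  qed
qed

lemma mem_plus_image: "(x::nat) \<in> (\<lambda>y. y + n) ` C \<longleftrightarrow> n \<le> x \<and> x - n \<in> C"
proof
  assume "n \<le> x \<and> x - n \<in> C"
  then show "x \<in> (\<lambda>y. y + n) ` C" by (intro image_eqI[of _ _ "x - n"]) auto
qed auto

lemma ivl2: "{1..2*(s+1)::nat} = {1..2*s} \<union> {2*s+1, 2*s+2}" by auto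

lemma Pt_sub': "Pt r t C \<Longrightarrow> \<forall>x\<in>C. 2*t+1 \<le> x \<and> x \<le> 2*r" unfolding Pt_def by auto

lemma Pt_sub: "Pt r t C \<Longrightarrow> C \<subseteq> {2*t+1..2*r}" unfolding Pt_def by auto

lemma card_lowpart:
  assumes "Pt r s C" "s \<le> r"
  shows "card ({1..2*s} \<union> C) = s + r"
proof -
  have "C \<subseteq> {2*s+1..2*r}" using Pt_sub[OF assms(1)] .
  then have d: "{1..2*s} \<inter> C = {}" by auto
  have f: "finite C" using \<open>C \<subseteq> _\<close> by (auto intro: finite_subset)
  have "card ({1..2*s} \<union> C) = 2*s + card C" using card_Un_disjoint[OF _ f d] by simp
  then show ?thesis using Pt_card[OF assms(1)] assms(2) by simp
qed

lemma qcase: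
  assumes P: "Pt r s C" and sr: "s < r" and n: "2*r \<le> n" and q: "2*s+2 \<in> C"
    and S: "S = FormS n s C"
  shows "n+2*s+2 \<in> S" "2*s+1 \<notin> S" "n+2*s+1 \<notin> S"
    "insert (2*s+1) (S - {n+2*s+2}) = FormS n (s+1) (C - {2*s+2})"
    "sgn_ins (n+2*s+2) (S - {n+2*s+2}) * sgn_ins (2*s+1) (S - {n+2*s+2}) = (-1) ^ (s + r)"
proof -
  have sub: "\<forall>x\<in>C. 2*s+1 \<le> x \<and> x \<le> 2*r" using Pt_sub'[OF P] .
  have p: "2*s+1 \<notin> C" using Pt_step(1)[OF P sr] q by simp
  have sub2: "\<forall>x\<in>C. 2*s+2 \<le> x" using sub p by (metis Suc_eq_plus1 add_Suc_right le_antisym not_less_eq_eq one_add_one)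
  show "n+2*s+2 \<in> S" using q unfolding S FormS_def mem_plus_image by simp
  show "2*s+1 \<notin> S" using p sub sub2 sr n unfolding S FormS_def mem_plus_image by auto
  show "n+2*s+1 \<notin> S" using p sub sub2 sr n unfolding S FormS_def mem_plus_image by auto
  show "insert (2*s+1) (S - {n+2*s+2}) = FormS n (s+1) (C - {2*s+2})"
    using p q sub sub2 sr n unfolding S FormS_def ivl2 mem_plus_image set_eq_iff by auto
  have e1: "{t \<in> S - {n+2*s+2}. t < n+2*s+2} = {1..2*s} \<union> C"
    using p q sub sub2 sr n unfolding S FormS_def ivl2 mem_plus_image set_eq_iff by auto
  have e2: "{t \<in> S - {n+2*s+2}. t < 2*s+1} = {1..2*s}"
    using p q sub sub2 sr n unfolding S FormS_def ivl2 mem_plus_image set_eq_iff by auto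
  show "sgn_ins (n+2*s+2) (S - {n+2*s+2}) * sgn_ins (2*s+1) (S - {n+2*s+2}) = (-1) ^ (s + r)"
  proof -
    have cl: "card ({1..2*s} \<union> C) = s + r" using card_lowpart[OF P] sr by simp
    show ?thesis unfolding sgn_ins_def e1 e2 cl by (simp add: power_mult)
  qed
qed

lemma pcase:
  assumes P: "Pt r s C" and sr: "s < r" and n: "2*r \<le> n" and p: "2*s+1 \<in> C"
    and S: "S = FormS n s C"
  shows "n+2*s+1 \<in> S" "2*s+2 \<notin> S" "n+2*s+2 \<notin> S"
    "insert (2*s+2) (S - {n+2*s+1}) = FormS n (s+1) (C - {2*s+1})"
    "sgn_ins (n+2*s+1) (S - {n+2*s+1}) * sgn_ins (2*s+2) (S - {n+2*s+1}) = - ((-1) ^ (s + r))"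
proof -
  have sub: "\<forall>x\<in>C. 2*s+1 \<le> x \<and> x \<le> 2*r" using Pt_sub'[OF P] .
  have q: "2*s+2 \<notin> C" using Pt_step(1)[OF P sr] p by simp
  have sub2: "\<forall>x\<in>C. x = 2*s+1 \<or> 2*s+3 \<le> x" using sub q by (metis Suc_eq_plus1 add_Suc_right le_antisym not_less_eq_eq numeral_2_eq_2 numeral_3_eq_3 one_add_one)
  show "n+2*s+1 \<in> S" using p unfolding S FormS_def mem_plus_image by simp
  show "2*s+2 \<notin> S" using q sub sub2 sr n unfolding S FormS_def mem_plus_image by auto
  show "n+2*s+2 \<notin> S" using q sub sub2 sr n unfolding S FormS_def mem_plus_image by auto
  show "insert (2*s+2) (S - {n+2*s+1}) = FormS n (s+1) (C - {2*s+1})"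
    using p q sub sub2 sr n unfolding S FormS_def ivl2 mem_plus_image set_eq_iff by auto
  have e1: "{t \<in> S - {n+2*s+1}. t < n+2*s+1} = {1..2*s} \<union> C"
    using p q sub sub2 sr n unfolding S FormS_def ivl2 mem_plus_image set_eq_iff by auto
  have e2: "{t \<in> S - {n+2*s+1}. t < 2*s+2} = insert (2*s+1) {1..2*s}"
    using p q sub sub2 sr n unfolding S FormS_def ivl2 mem_plus_image set_eq_iff by auto
  show "sgn_ins (n+2*s+1) (S - {n+2*s+1}) * sgn_ins (2*s+2) (S - {n+2*s+1}) = - ((-1) ^ (s + r))"
  proof -
    have cl: "card ({1..2*s} \<union> C) = s + r" using card_lowpart[OF P] sr by simp
    show ?thesis unfolding sgn_ins_def e1 e2 cl by (simp add: power_mult)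
  qed
qed

lemma qconv:
  assumes P: "Pt r (s+1) C" and sr: "s < r" and n: "2*r \<le> n"
    and h: "n+2*s+2 \<in> S" "2*s+1 \<notin> S" "insert (2*s+1) (S - {n+2*s+2}) = FormS n (s+1) C"
  shows "Pt r s (insert (2*s+2) C) \<and> S = FormS n s (insert (2*s+2) C)"
proof
  have sub: "\<forall>x\<in>C. 2*s+3 \<le> x \<and> x \<le> 2*r" using Pt_sub'[OF P] by auto
  have b: "\<And>u. s+1 < u \<Longrightarrow> u \<le> r \<Longrightarrow> (2*u-1 \<in> C \<longleftrightarrow> 2*u \<notin> C)"
    using P unfolding Pt_def by auto
  show "Pt r s (insert (2*s+2) C)"
    unfolding Pt_def
  proof (intro conjI allI impI)
    show "insert (2*s+2) C \<subseteq> {2*s+1..2*r}" using sub sr by auto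
    fix u assume u: "s < u \<and> u \<le> r"
    show "(2*u-1 \<in> insert (2*s+2) C) = (2*u \<notin> insert (2*s+2) C)"
    proof (cases "u = s+1")
      case True then show ?thesis using sub by auto
    next
      case False then show ?thesis using b[of u] u by auto
    qed
  qed
  have "S = insert (n+2*s+2) (insert (2*s+1) (S - {n+2*s+2}) - {2*s+1})" using h(1,2) by auto
  also have "\<dots> = FormS n s (insert (2*s+2) C)"
    unfolding h(3) using sub n unfolding FormS_def ivl2 mem_plus_image set_eq_iff by auto
  finally show "S = FormS n s (insert (2*s+2) C)" .
qed

lemma pconv:
  assumes P: "Pt r (s+1) C" and sr: "s < r" and n: "2*r \<le> n"
    and h: "n+2*s+1 \<in> S" "2*s+2 \<notin> S" "insert (2*s+2) (S - {n+2*s+1}) = FormS n (s+1) C"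
  shows "Pt r s (insert (2*s+1) C) \<and> S = FormS n s (insert (2*s+1) C)"
proof
  have sub: "\<forall>x\<in>C. 2*s+3 \<le> x \<and> x \<le> 2*r" using Pt_sub'[OF P] by auto
  have b: "\<And>u. s+1 < u \<Longrightarrow> u \<le> r \<Longrightarrow> (2*u-1 \<in> C \<longleftrightarrow> 2*u \<notin> C)"
    using P unfolding Pt_def by auto
  show "Pt r s (insert (2*s+1) C)"
    unfolding Pt_def
  proof (intro conjI allI impI)
    show "insert (2*s+1) C \<subseteq> {2*s+1..2*r}" using sub sr by auto
    fix u assume u: "s < u \<and> u \<le> r"
    show "(2*u-1 \<in> insert (2*s+1) C) = (2*u \<notin> insert (2*s+1) C)"
    proof (cases "u = s+1")
      case True then show ?thesis using sub by auto
    next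
      case False then show ?thesis using b[of u] u by auto
    qed
  qed
  have "S = insert (n+2*s+1) (insert (2*s+2) (S - {n+2*s+1}) - {2*s+2})" using h(1,2) by auto
  also have "\<dots> = FormS n s (insert (2*s+1) C)"
    unfolding h(3) using sub n unfolding FormS_def ivl2 mem_plus_image set_eq_iff by auto
  finally show "S = FormS n s (insert (2*s+1) C)" .
qed

lemma VYF:
  assumes sr: "s < r" and n: "2*r \<le> n"
  shows "VYf n s (\<lambda>S'. if Fm n r (s+1) S' then K else 0) S = (if Fm n r s S then (-1)^(s+r) * K else 0)"
proof (cases "Fm n r s S")
  case True
  then obtain C where P: "Pt r s C" and S: "S = FormS n s C" unfolding Fm_def by auto
  show ?thesis
  proof (cases "2*s+2 \<in> C")
    case True
    note q = qcase[OF P sr n True S]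
    have "Fm n r (s+1) (insert (2*s+1) (S - {n+2*s+2}))"
      unfolding q(4) Fm_def using Pt_step(3)[OF P sr True] by auto
    then show ?thesis unfolding VYf_def using q \<open>Fm n r s S\<close> by simp
  next
    case False
    then have pC: "2*s+1 \<in> C" using Pt_step(1)[OF P sr] by simp
    note p = pcase[OF P sr n pC S]
    have "Fm n r (s+1) (insert (2*s+2) (S - {n+2*s+1}))"
      unfolding p(4) Fm_def using Pt_step(2)[OF P sr pC] by auto
    then show ?thesis unfolding VYf_def using p \<open>Fm n r s S\<close> by simp
  qed
next
  case False
  have t1: "\<not> (n+2*s+2 \<in> S \<and> 2*s+1 \<notin> S \<and> Fm n r (s+1) (insert (2*s+1) (S - {n+2*s+2})))"
  proof
    assume h: "n+2*s+2 \<in> S \<and> 2*s+1 \<notin> S \<and> Fm n r (s+1) (insert (2*s+1) (S - {n+2*s+2}))"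
    then obtain C where "Pt r (s+1) C" "insert (2*s+1) (S - {n+2*s+2}) = FormS n (s+1) C" unfolding Fm_def by auto
    then have "Pt r s (insert (2*s+2) C) \<and> S = FormS n s (insert (2*s+2) C)" using qconv sr n h by blast
    then show False using False unfolding Fm_def by blast
  qed
  have t2: "\<not> (n+2*s+1 \<in> S \<and> 2*s+2 \<notin> S \<and> Fm n r (s+1) (insert (2*s+2) (S - {n+2*s+1})))"
  proof
    assume h: "n+2*s+1 \<in> S \<and> 2*s+2 \<notin> S \<and> Fm n r (s+1) (insert (2*s+2) (S - {n+2*s+1}))"
    then obtain C where "Pt r (s+1) C" "insert (2*s+2) (S - {n+2*s+1}) = FormS n (s+1) C" unfolding Fm_def by auto
    then have "Pt r s (insert (2*s+1) C) \<and> S = FormS n s (insert (2*s+1) C)" using pconv sr n h by blast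
    then show False using False unfolding Fm_def by blast
  qed
  show ?thesis unfolding VYf_def using t1 t2 False by auto
qed



lemma VYf_zero: "VYf n s (\<lambda>_. 0) S = 0" unfolding VYf_def by simp
lemma VYf_scale: "VYf n s (\<lambda>S'. c * \<phi> S') S = c * VYf n s \<phi> S" unfolding VYf_def by (simp add: algebra_simps)

fun Bst :: "nat \<Rightarrow> nat \<Rightarrow> nat \<Rightarrow> nat \<Rightarrow> tens" where
  "Bst n m r 0 = v0 n (2*r)"
| "Bst n m r (Suc j) = Y n (m - j - 1) (Bst n m r j)"

lemma Bst_formula:
  assumes n: "n = 2*m" and rm: "r \<le> m"
  shows "j \<le> m - r \<Longrightarrow> Bst n m r j = (\<lambda>x. if x = ({1..2*r}, {1..2*(m-j)}) then 2^j else 0)"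
proof (induction j)
  case 0 then show ?case using n by (intro ext) (simp add: v0_def x0_def)
next
  case (Suc j)
  define s where "s = m - j - 1"
  have sr: "r \<le> s" and s2: "2*s+2 = 2*(m-j)" and sn: "2*s+2 \<le> n" using Suc.prems n unfolding s_def by auto
  have IH: "Bst n m r j = (\<lambda>x. if x = ({1..2*r}, {1..2*s+2}) then 2^j else 0)" using Suc s2 by simp
  have ms: "2*(m - Suc j) = 2*s" unfolding s_def by simp
  show ?case
  proof
    fix x :: "nat set \<times> nat set"
    obtain S J where x: "x = (S,J)" by force
    have v: "VYf n s (\<lambda>S'. Bst n m r j (S', J)) S = 0"
    proof -
      have "insert (2*s+1) X \<noteq> {1..2*r}" "insert (2*s+2) X \<noteq> {1..2*r}" for X
      proof -
        have "2*s+1 \<notin> {1..2*r}" "2*s+2 \<notin> {1..2*r}" using sr by auto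
        then show "insert (2*s+1) X \<noteq> {1..2*r}" "insert (2*s+2) X \<noteq> {1..2*r}" by blast+
      qed
      then show ?thesis unfolding IH VYf_def by auto
    qed
    have sy: "SYf s (\<lambda>J'. Bst n m r j (S, J')) J = (if S = {1..2*r} \<and> J = {1..2*s} then 2 * 2^j else 0)"
    proof (cases "J = {1..2*s}")
      case True then show ?thesis unfolding IH True SY_lo by simp
    next
      case False
      then have "\<not> (2*s+1 \<notin> J \<and> 2*s+2 \<notin> J \<and> insert (2*s+1) (insert (2*s+2) J) = {1..2*s+2})"
        using SY_J by blast
      then show ?thesis unfolding IH SYf_def using False by auto
    qed
    show "Bst n m r (Suc j) x = (if x = ({1..2*r}, {1..2*(m - Suc j)}) then 2 ^ Suc j else 0)"
      unfolding x Bst.simps s_def[symmetric] Y_eq[OF sn] v sy ms by auto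
  qed
qed

lemma SuppY:
  assumes sn: "2*s+2 \<le> n" and supp: "\<forall>S J. \<Phi> (S,J) \<noteq> 0 \<longrightarrow> D \<subseteq> J"
    and D: "2*s+1 \<notin> D" "2*s+2 \<notin> D"
  shows "\<forall>S J. Y n s \<Phi> (S,J) \<noteq> 0 \<longrightarrow> D \<subseteq> J"
proof (intro allI impI, rule ccontr)
  fix S J
  assume nz: "Y n s \<Phi> (S,J) \<noteq> 0" and nd: "\<not> D \<subseteq> J"
  have z: "(\<lambda>S'. \<Phi> (S',J)) = (\<lambda>_. 0)" using supp nd by blast
  have "\<not> D \<subseteq> insert (2*s+1) (insert (2*s+2) J)" using nd D by auto
  then have z2: "\<Phi> (S, insert (2*s+1) (insert (2*s+2) J)) = 0" using supp by blast
  have "SYf s (\<lambda>J'. \<Phi> (S,J')) J = 0" unfolding SYf_def z2 by simp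
  then show False using nz unfolding Y_eq[OF sn] z VYf_zero by simp
qed

lemma Fm_top: "Fm n r r S \<longleftrightarrow> S = {1..2*r}"
proof
  assume "Fm n r r S"
  then obtain C where "Pt r r C" "S = FormS n r C" unfolding Fm_def by auto
  moreover then have "C = {}" unfolding Pt_def by auto
  ultimately show "S = {1..2*r}" by (simp add: FormS_def)
next
  assume "S = {1..2*r}"
  moreover have "Pt r r {}" unfolding Pt_def by auto
  ultimately show "Fm n r r S" unfolding Fm_def FormS_def by auto
qed

lemma AStep:
  assumes sr: "s < r" and n: "2*r \<le> n"
    and supp: "\<And>S J. \<Phi> (S,J) \<noteq> 0 \<Longrightarrow> {1..2*s+2} \<subseteq> J"
    and val: "\<And>S. \<Phi> (S, {1..2*s+2}) = (if Fm n r (s+1) S then K else 0)"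
  shows "\<And>S J. Y n s (Y n s \<Phi>) (S,J) \<noteq> 0 \<Longrightarrow> {1..2*s} \<subseteq> J"
    and "\<And>S. Y n s (Y n s \<Phi>) (S, {1..2*s}) = (if Fm n r s S then 4 * (-1)^(s+r) * K else 0)"
proof -
  have sn: "2*s+2 \<le> n" using sr n by simp
  have supp': "\<forall>S J. \<Phi> (S,J) \<noteq> 0 \<longrightarrow> {1..2*s} \<subseteq> J" using supp by fastforce
  have D: "2*s+1 \<notin> {1..2*s}" "2*s+2 \<notin> {1..2*s}" by auto
  have s1: "\<forall>S J. Y n s \<Phi> (S,J) \<noteq> 0 \<longrightarrow> {1..2*s} \<subseteq> J"
    using SuppY[OF sn supp' D] .
  show "\<And>S J. Y n s (Y n s \<Phi>) (S,J) \<noteq> 0 \<Longrightarrow> {1..2*s} \<subseteq> J"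
    using SuppY[OF sn s1 D] by blast
  fix S
  have z0: "(\<lambda>S'. \<Phi> (S', {1..2*s})) = (\<lambda>_. 0)"
  proof
    fix S'
    have "\<not> {1..2*s+2} \<subseteq> {1..2*s}" by auto
    then show "\<Phi> (S', {1..2*s}) = 0" using supp by blast
  qed
  have a: "Y n s \<Phi> (S', {1..2*s}) = 2 * \<Phi> (S', {1..2*s+2})" for S'
    unfolding Y_eq[OF sn] z0 VYf_zero SY_lo by simp
  have b: "Y n s \<Phi> (S, {1..2*s+2}) = VYf n s (\<lambda>S'. \<Phi> (S', {1..2*s+2})) S"
    unfolding Y_eq[OF sn] SY_hi by simp
  have "Y n s (Y n s \<Phi>) (S, {1..2*s}) = VYf n s (\<lambda>S'. 2 * \<Phi> (S', {1..2*s+2})) S + 2 * VYf n s (\<lambda>S'. \<Phi> (S', {1..2*s+2})) S"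
    unfolding Y_eq[OF sn, of _ S "{1..2*s}"] a SY_lo b ..
  also have "\<dots> = 4 * VYf n s (\<lambda>S'. if Fm n r (s+1) S' then K else 0) S"
    unfolding VYf_scale val by simp
  also have "\<dots> = (if Fm n r s S then 4 * (-1)^(s+r) * K else 0)"
    unfolding VYF[OF sr n] by simp
  finally show "Y n s (Y n s \<Phi>) (S, {1..2*s}) = (if Fm n r s S then 4 * (-1)^(s+r) * K else 0)" .
qed

fun Ast :: "nat \<Rightarrow> nat \<Rightarrow> nat \<Rightarrow> nat \<Rightarrow> tens" where
  "Ast n m r 0 = Bst n m r (m - r)"
| "Ast n m r (Suc j) = Y n (r - j - 1) (Y n (r - j - 1) (Ast n m r j))"

lemma Ast_inv:
  assumes n: "n = 2*m" and rm: "r \<le> m"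
  shows "j \<le> r \<Longrightarrow> \<exists>K. K \<noteq> 0 \<and> (\<forall>S J. Ast n m r j (S,J) \<noteq> 0 \<longrightarrow> {1..2*(r-j)} \<subseteq> J)
           \<and> (\<forall>S. Ast n m r j (S, {1..2*(r-j)}) = (if Fm n r (r-j) S then K else 0))"
proof (induction j)
  case 0
  have B: "Ast n m r 0 = (\<lambda>x. if x = ({1..2*r}, {1..2*r}) then 2^(m-r) else 0)"
  proof -
    have "m - (m - r) = r" using rm by simp
    then show ?thesis using Bst_formula[OF n rm, of "m - r"] by simp
  qed
  show ?case
    unfolding B by (rule exI[of _ "2^(m-r)"]) (auto simp: Fm_top)
next
  case (Suc j)
  define s where "s = r - j - 1"
  have sr: "s < r" and rj: "r - j = s + 1" "r - Suc j = s" and nn: "2*r \<le> n"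
    using Suc.prems n rm unfolding s_def by auto
  obtain K where K: "K \<noteq> 0" "\<forall>S J. Ast n m r j (S,J) \<noteq> 0 \<longrightarrow> {1..2*s+2} \<subseteq> J"
    "\<forall>S. Ast n m r j (S, {1..2*s+2}) = (if Fm n r (s+1) S then K else 0)"
    using Suc.IH Suc.prems rj by (auto simp: algebra_simps)
  note st = AStep[OF sr nn, of "Ast n m r j" K]
  have A: "Ast n m r (Suc j) = Y n s (Y n s (Ast n m r j))" by (simp add: s_def)
  show ?case
    apply (rule exI[of _ "4 * (-1)^(s+r) * K"])
    unfolding A rj using st K by auto
qed



lemma Y_mem:
  assumes U: "is_submodule n k U" and sn: "2*s+2 \<le> n" and \<Phi>: "\<Phi> \<in> U"
  shows "Y n s \<Phi> \<in> U"
  using U \<Phi> sn unfolding is_submodule_def Y_def by auto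

lemma Bst_mem:
  assumes U: "is_submodule n k U" and v: "v0 n (2*r) \<in> U" and n: "n = 2*m"
  shows "j \<le> m - r \<Longrightarrow> Bst n m r j \<in> U"
proof (induction j)
  case 0 then show ?case using v by simp
next
  case (Suc j)
  have "2*(m - j - 1)+2 \<le> n" using Suc.prems n by auto
  then show ?case using Y_mem[OF U] Suc by simp
qed

lemma Ast_mem:
  assumes U: "is_submodule n k U" and v: "v0 n (2*r) \<in> U" and n: "n = 2*m" and rm: "r \<le> m"
  shows "j \<le> r \<Longrightarrow> Ast n m r j \<in> U"
proof (induction j)
  case 0 then show ?case using Bst_mem[OF U v n] by simp
next
  case (Suc j)
  have "2*(r - j - 1)+2 \<le> n" using Suc.prems n rm by auto
  then show ?case using Y_mem[OF U] Suc by simp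
qed

lemma Codd_Pt: "Pt r 0 {x \<in> {1..2*r}. odd x}"
  unfolding Pt_def by auto

lemma TF_psi:
  assumes n: "n = 2*m" and r: "r = m - i" and K: "K \<noteq> 0"
    and w: "\<And>S. w (S, {}) = (if Fm n r 0 S then K else 0)"
  shows "TF n (psi n m i) w \<noteq> 0"
proof -
  let ?A = "Pow {1..2*n} \<times> Pow {1..n}"
  let ?P = "\<lambda>x. snd x = {} \<and> Fm n r 0 (fst x)"
  have summ: "of_real (2 ^ card (snd x)) * psi n m i x * cnj (w x) = (if ?P x then cnj K else 0)" for x
  proof -
    obtain S J where x: "x = (S,J)" by force
    show ?thesis
    proof (cases "J = {}")
      case False then show ?thesis unfolding x psi_def by simp
    next
      case True
      show ?thesis
      proof (cases "Fm n r 0 S")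
        case True
        then obtain C where P: "Pt r 0 C" and S: "S = FormS n 0 C" unfolding Fm_def by auto
        have "C \<subseteq> {1..n}" using Pt_sub'[OF P] n r by auto
        moreover have "card C = m - i" using Pt_card[OF P] r by simp
        moreover have "S = C \<union> (\<lambda>x. x + n) ` C" using S by (simp add: FormS_def)
        ultimately have "psi n m i (S, {}) = 1" unfolding psi_def by auto
        then show ?thesis using True \<open>J = {}\<close> w unfolding x by simp
      next
        case False
        then show ?thesis using \<open>J = {}\<close> w unfolding x by simp
      qed
    qed
  qed
  have "TF n (psi n m i) w = (\<Sum>x\<in>?A. if ?P x then cnj K else 0)"
    unfolding TF_def using summ by simp
  also have "\<dots> = of_nat (card (?A \<inter> {x. ?P x})) * cnj K"
    by (simp add: sum.If_cases)
  finally have eq: "TF n (psi n m i) w = of_nat (card (?A \<inter> {x. ?P x})) * cnj K" .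
  let ?C = "{x \<in> {1..2*r}. odd x}"
  have mem: "(FormS n 0 ?C, {}) \<in> ?A \<inter> {x. ?P x}"
  proof -
    have "FormS n 0 ?C \<subseteq> {1..2*n}" using n r unfolding FormS_def by auto
    moreover have "Fm n r 0 (FormS n 0 ?C)" unfolding Fm_def using Codd_Pt by blast
    ultimately show ?thesis by auto
  qed
  have fin: "finite (?A \<inter> {x. ?P x})" by simp
  have ne: "?A \<inter> {x. ?P x} \<noteq> {}" using mem by blast
  have "card (?A \<inter> {x. ?P x}) \<noteq> 0" using ne by (simp only: card_0_eq[OF fin] not_False_eq_True)
  then show ?thesis unfolding eq using K by simp
qed



lemma vrep_nz2:
  assumes "vrep n a c \<phi> S \<noteq> 0"
  shows "(a \<in> S \<and> \<phi> (insert (dual_idx n c) (S - {a})) \<noteq> 0) \<or> (c \<in> S \<and> \<phi> (insert (dual_idx n a) (S - {c})) \<noteq> 0)"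
proof -
  have "wedge_op a (contr_op (dual_idx n c) \<phi>) S \<noteq> 0 \<or> wedge_op c (contr_op (dual_idx n a) \<phi>) S \<noteq> 0"
    using assms unfolding vrep_def by auto
  then show ?thesis by (auto dest!: wedge_nz contr_nz)
qed

lemma cliff_cases:
  assumes "cliff n x \<chi> J \<noteq> 0"
  shows "(x \<le> n \<and> x \<in> J \<and> \<chi> (J - {x}) \<noteq> 0) \<or> (\<not> x \<le> n \<and> x - n \<notin> J \<and> \<chi> (insert (x - n) J) \<noteq> 0)"
  using assms unfolding cliff_def by (auto split: if_splits dest!: wedge_nz contr_nz)

lemma v0_eq: "v0 n k (S, J) \<noteq> 0 \<longleftrightarrow> S = {1..k} \<and> J = {1..n}"
  by (simp add: v0_def x0_def)

lemma raise_zero: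
  assumes ab: "1 \<le> a" "a < b" "b \<le> n" and k: "k \<le> n" and c: "c = n + b \<or> c = b"
  shows "trep n a c (v0 n k) = (\<lambda>_. 0)"
proof
  fix x :: "nat set \<times> nat set"
  obtain S J where x: "x = (S,J)" by force
  have da: "dual_idx n a = a + n" using ab by (simp add: dual_idx_def)
  have v: "vrep n a c (\<lambda>S'. v0 n k (S', J)) S = 0"
  proof (rule ccontr)
    assume "vrep n a c (\<lambda>S'. v0 n k (S', J)) S \<noteq> 0"
    from vrep_nz2[OF this] have
      "(a \<in> S \<and> insert (dual_idx n c) (S - {a}) = {1..k}) \<or> (c \<in> S \<and> insert (a + n) (S - {c}) = {1..k})"
      unfolding v0_eq da by blast
    then show False
    proof
      assume h: "a \<in> S \<and> insert (dual_idx n c) (S - {a}) = {1..k}"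
      show False
      proof (cases "c = n + b")
        case True
        then have "dual_idx n c = b" using ab by (simp add: dual_idx_def)
        then have h2: "insert b (S - {a}) = {1..k}" using h by simp
        then have "b \<in> {1..k}" by (metis insertI1)
        then have "b \<le> k" by simp
        then have "a \<in> {1..k}" using ab by auto
        then have "a \<in> insert b (S - {a})" using h2 by simp
        then show False using ab by auto
      next
        case False
        then have "dual_idx n c = b + n" using c ab by (simp add: dual_idx_def)
        then have "b + n \<in> {1..k}" using h by (metis insertI1)
        then show False using k ab by auto
      qed
    next
      assume "c \<in> S \<and> insert (a + n) (S - {c}) = {1..k}"
      then have "a + n \<in> {1..k}" by (metis insertI1)
      then show False using k ab by auto
    qed
  qed
  have s: "srep n a c (\<lambda>J'. v0 n k (S, J')) J = 0"
  proof (rule ccontr)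
    assume "srep n a c (\<lambda>J'. v0 n k (S, J')) J \<noteq> 0"
    from srep_nz[OF this] obtain y z where yz: "y \<in> {a,c}" "z \<in> {a,c}" "cliff n y (cliff n z (\<lambda>J'. v0 n k (S, J'))) J \<noteq> 0"
      by blast
    have bn: "b \<in> {1..n}" "a \<in> {1..n}" "a \<noteq> b" using ab by auto
    from cliff_cases[OF yz(3)] show False
    proof (elim disjE conjE)
      assume y: "y \<le> n" "y \<in> J" and "cliff n z (\<lambda>J'. v0 n k (S, J')) (J - {y}) \<noteq> 0"
      from cliff_cases[OF this(3)] show False
      proof (elim disjE conjE)
        assume z: "z \<le> n" "z \<in> J - {y}" and "v0 n k (S, J - {y} - {z}) \<noteq> 0"
        then have e: "J - {y} - {z} = {1..n}" unfolding v0_eq by simp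
        have "z \<in> {1..n}" using z yz ab c by auto
        then have "z \<in> J - {y} - {z}" using e by simp
        then show False by simp
      next
        assume z: "\<not> z \<le> n" "z - n \<notin> J - {y}" and "v0 n k (S, insert (z - n) (J - {y})) \<noteq> 0"
        then have e: "insert (z - n) (J - {y}) = {1..n}" unfolding v0_eq by simp
        have "y = a" using y z yz ab c by auto
        moreover have "z - n = b" using z yz ab c by auto
        moreover have "a \<in> insert (z - n) (J - {y})" using e bn by simp
        ultimately show False using bn by simp
      qed
    next
      assume y: "\<not> y \<le> n" "y - n \<notin> J" and "cliff n z (\<lambda>J'. v0 n k (S, J')) (insert (y - n) J) \<noteq> 0"
      from cliff_cases[OF this(3)] show False
      proof (elim disjE conjE)
        assume z: "z \<le> n" "z \<in> insert (y - n) J" and "v0 n k (S, insert (y - n) J - {z}) \<noteq> 0"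
        then have e: "insert (y - n) J - {z} = {1..n}" unfolding v0_eq by simp
        have "z \<in> {1..n}" using z yz ab c by auto
        then have "z \<in> insert (y - n) J - {z}" using e by simp
        then show False by simp
      next
        assume z: "\<not> z \<le> n" "z - n \<notin> insert (y - n) J" and "v0 n k (S, insert (z - n) (insert (y - n) J)) \<noteq> 0"
        have "y = n + b" "z = n + b" using y z yz ab c by auto
        then show False using z by simp
      qed
    qed
  qed
  show "trep n a c (v0 n k) x = 0" unfolding x trep_def using v s by simp
qed

lemma hw_v0:
  assumes k: "k \<le> n"
  shows "hw_vector n k (v0 n k)"
  unfolding hw_vector_def
proof (intro conjI ballI allI impI)
  show "v0 n k \<noteq> (\<lambda>_. 0)" by (rule v0_nz)
  fix j assume j: "j \<in> {1..n}"
  show "trep n j (n + j) (v0 n k) = (\<lambda>x. (1/2 + (if j \<le> k then 1 else 0)) * v0 n k x)"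
  proof -
    have "trep n j (n + j) (v0 n k) = (\<lambda>x. ev n j x * v0 n k x)" using j by (intro h_action) auto
    also have "\<dots> = (\<lambda>x. (1/2 + (if j \<le> k then 1 else 0)) * v0 n k x)"
    proof
      fix x
      show "ev n j x * v0 n k x = (1/2 + (if j \<le> k then 1 else 0)) * v0 n k x"
      proof (cases "x = x0 n k")
        case True then show ?thesis using j k by (simp add: ev_def x0_def)
      qed (simp add: v0_def)
    qed
    finally show ?thesis .
  qed
next
  fix a b assume "1 \<le> a \<and> a < b \<and> b \<le> n"
  then show "trep n a (n + b) (v0 n k) = (\<lambda>_. 0)" "trep n a b (v0 n k) = (\<lambda>_. 0)"
    using raise_zero k by auto
qed



lemma hw_is_v0:
  assumes W: "is_submodule n k W" and v: "v \<in> W" and hw: "hw_vector n k v" and k: "k \<le> n"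
  shows "v0 n k \<in> W"
proof -
  have vt: "v \<in> tspace n k" using W v unfolding is_submodule_def by auto
  have ev: "ev n j x = lam k j" if x: "v x \<noteq> 0" and j: "j \<in> {1..n}" for x j
  proof -
    have "trep n j (n + j) v = (\<lambda>x. (1/2 + (if j \<le> k then 1 else 0)) * v x)" using hw j unfolding hw_vector_def by auto
    moreover have "trep n j (n + j) v = (\<lambda>x. ev n j x * v x)" using j by (intro h_action) auto
    ultimately have "ev n j x * v x = lam k j * v x" unfolding lam_def by metis
    then show ?thesis using x by simp
  qed
  have x0: "x = x0 n k" if x: "v x \<noteq> 0" for x
  proof -
    obtain S J where xs: "x = (S,J)" by force
    have "S \<subseteq> {1..2*n}" "card S = k" "J \<subseteq> {1..n}" using vt x unfolding tspace_def xs by auto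
    moreover have "\<forall>j\<in>{1..n}. ev n j (S,J) = lam k j" using ev x xs by auto
    ultimately show ?thesis using KL k xs by blast
  qed
  have "v \<noteq> (\<lambda>_. 0)" using hw unfolding hw_vector_def by blast
  then obtain x where "v x \<noteq> 0" by (meson ext)
  then have "v (x0 n k) \<noteq> 0" using x0 by auto
  then show ?thesis using WP[OF W v _ k] by blast
qed

lemma gen_submodule:
  assumes k: "k \<le> n" "even n"
  defines "W0 \<equiv> {\<Phi>. \<forall>U. is_submodule n k U \<and> v0 n k \<in> U \<longrightarrow> \<Phi> \<in> U}"
  shows "cartan_component n k W0"
proof -
  have sub: "is_submodule n k W0"
    unfolding is_submodule_def csubspace_def
  proof (intro conjI ballI allI)
    show "(\<lambda>_. 0) \<in> W0" unfolding W0_def by (simp add: is_submodule_def csubspace_def)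
    show "W0 \<subseteq> tspace n k"
    proof
      fix x assume "x \<in> W0"
      then show "x \<in> tspace n k" unfolding W0_def using submodule_tspace v0_tspace[OF k] by simp
    qed
  next
    fix x y assume xy: "x \<in> W0" "y \<in> W0"
    show "(\<lambda>t. x t + y t) \<in> W0" unfolding W0_def
    proof (intro CollectI allI impI)
      fix U assume U: "is_submodule n k U \<and> v0 n k \<in> U"
      then have "x \<in> U" "y \<in> U" using xy unfolding W0_def by auto
      then show "(\<lambda>t. x t + y t) \<in> U" using U unfolding is_submodule_def csubspace_def by simp
    qed
  next
    fix c x assume x: "x \<in> W0"
    show "(\<lambda>t. c * x t) \<in> W0" unfolding W0_def
    proof (intro CollectI allI impI)
      fix U assume U: "is_submodule n k U \<and> v0 n k \<in> U"
      then have "x \<in> U" using x unfolding W0_def by auto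
      then show "(\<lambda>t. c * x t) \<in> U" using U unfolding is_submodule_def csubspace_def by simp
    qed
  next
    fix a b x assume ab: "a \<in> {1..2*n}" "b \<in> {1..2*n}" and x: "x \<in> W0"
    show "trep n a b x \<in> W0" unfolding W0_def
    proof (intro CollectI allI impI)
      fix U assume U: "is_submodule n k U \<and> v0 n k \<in> U"
      then have "x \<in> U" using x unfolding W0_def by auto
      then show "trep n a b x \<in> U" using U ab unfolding is_submodule_def by simp
    qed
  qed
  have v0W: "v0 n k \<in> W0" unfolding W0_def by blast
  have irr: "irreducible_sub n k W0"
    unfolding irreducible_sub_def
  proof (intro conjI allI impI)
    show "is_submodule n k W0" by (rule sub)
    show "W0 \<noteq> {\<lambda>_. 0}" using v0W v0_nz by auto
    fix U' assume U': "is_submodule n k U' \<and> U' \<subseteq> W0"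
    show "U' = {\<lambda>_. 0} \<or> U' = W0"
    proof (cases "\<exists>\<Phi>\<in>U'. \<Phi> (x0 n k) \<noteq> 0")
      case True
      then obtain \<Phi> where "\<Phi> \<in> U'" "\<Phi> (x0 n k) \<noteq> 0" by blast
      then have "v0 n k \<in> U'" using WP U' k by blast
      then have "W0 \<subseteq> U'" unfolding W0_def using U' by blast
      then show ?thesis using U' by blast
    next
      case False
      have kk: "k \<le> 2*n" using k by simp
      have "v0 n k \<in> Perp n k U'"
        unfolding Perp_def using v0_tspace[OF k] False TF_v0[OF kk] by auto
      moreover have "is_submodule n k (Perp n k U')" using submodule_Perp U' by blast
      ultimately have "W0 \<subseteq> Perp n k U'" unfolding W0_def by blast
      then have "\<forall>\<Phi>\<in>U'. \<Phi> = (\<lambda>_. 0)"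
        using U' TF_self_zero unfolding Perp_def by blast
      moreover have "(\<lambda>_. 0) \<in> U'" using U' unfolding is_submodule_def csubspace_def by blast
      ultimately show ?thesis by blast
    qed
  qed
  show ?thesis unfolding cartan_component_def using irr v0W hw_v0[OF k(1)] by blast
qed

theorem lemma4p4:
  fixes n m i :: nat
  assumes "n = 2 * m" and "1 \<le> i" and "i \<le> m"
  shows "(\<exists>W. cartan_component n (n - 2 * i) W) \<and>
         (\<forall>W. cartan_component n (n - 2 * i) W \<longrightarrow>
              proj_nonzero n (n - 2 * i) W (psi n m i))"
proof -
  define k where "k = n - 2 * i"
  define r where "r = m - i"
  have kr: "k = 2 * r" and kn: "k \<le> n" and rm: "r \<le> m" and ev: "even n" and kk: "k \<le> 2*n"
    using assms unfolding k_def r_def by auto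
  have part1: "\<exists>W. cartan_component n k W" using gen_submodule[OF kn ev] by blast
  have part2: "proj_nonzero n k W (psi n m i)" if cW: "cartan_component n k W" for W
    unfolding proj_nonzero_def
  proof (intro allI impI notI)
    fix U assume IC: "inv_complement n k W U" and psiU: "psi n m i \<in> U"
    have irrW: "irreducible_sub n k W" using cW unfolding cartan_component_def by blast
    then have subW: "is_submodule n k W" unfolding irreducible_sub_def by blast
    obtain v where "v \<in> W" "hw_vector n k v" using cW unfolding cartan_component_def by blast
    then have v0W: "v0 n k \<in> W" using hw_is_v0[OF subW _ _ kn] by blast
    have subU: "is_submodule n k U" and WU: "W \<inter> U = {\<lambda>_. 0}" using IC unfolding inv_complement_def by auto
    have "\<Phi> (x0 n k) = 0" if "\<Phi> \<in> U" for \<Phi>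
    proof (rule ccontr)
      assume "\<Phi> (x0 n k) \<noteq> 0"
      then have "v0 n k \<in> U" using WP[OF subU that _ kn] by blast
      then have "v0 n k \<in> W \<inter> U" using v0W by blast
      then show False using WU v0_nz by auto
    qed
    then have v0P: "v0 n k \<in> Perp n k U"
      unfolding Perp_def using v0_tspace[OF kn ev] TF_v0[OF kk] by auto
    have subWP: "is_submodule n k (W \<inter> Perp n k U)" using submodule_Int[OF subW submodule_Perp[OF subU]] .
    have "W \<inter> Perp n k U \<noteq> {\<lambda>_. 0}" using v0P v0W v0_nz by auto
    then have "W \<inter> Perp n k U = W" using irrW subWP unfolding irreducible_sub_def by blast
    then have WP': "W \<subseteq> Perp n k U" by blast
    have v0W': "v0 n (2*r) \<in> W" using v0W kr by simp
    have wW: "Ast n m r r \<in> W" using Ast_mem[OF subW v0W' assms(1) rm] by simp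
    then have "TF n (psi n m i) (Ast n m r r) = 0" using WP' psiU unfolding Perp_def by blast
    moreover obtain K where K: "K \<noteq> 0" "\<forall>S. Ast n m r r (S, {1..2*(r-r)}) = (if Fm n r (r-r) S then K else 0)"
      using Ast_inv[OF assms(1) rm, of r] by blast
    have "TF n (psi n m i) (Ast n m r r) \<noteq> 0"
      by (rule TF_psi[OF assms(1) r_def K(1)]) (use K(2) in simp)
    ultimately show False by simp
  qed
  show ?thesis using part1 part2 unfolding k_def by blast
qed


end
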